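(* The class of pseudo-orientable ribbon graphs is minor-closed: if $\mathbb{G}$ is pseudo-orientable, then every ribbon graph obtained from $\mathbb{G}$ by a sequence of edge deletions, vertex deletions and partial duals is pseudo-orientable.
   Context: A ribbon graph $\mathbb{G}$ is a surface with boundary written as the union of vertex discs and edge discs $E(\mathbb{G})$ meeting in disjoint line segments, each on the boundary of exactly one vertex and one edge, with each edge containing exactly two such segments. For connected $\mathbb{G}$, a quasi-tree is $F\subseteq E(\mathbb{G})$ such that the spanning ribbon subgraph $(V(\mathbb{G}),F)$ has exactly one boundary component; in general, a union of quasi-trees of the components. For $X\subseteq E(\mathbb{G})$, the partial dual $\mathbb{G}^X$ has the same edges and as vertices discs glued along each boundary component of $(V(\mathbb{G}),X)$ (interiors disjoint from each other and from edges), the old vertices being discarded. A bouquet is a ribbon graph with one vertex; a loop is orientable if with the vertex it forms an annulus, non-orientable if a Möbius band. A bouquet is pseudo-orientable if its vertex boundary circle is the union of two closed arcs $S_1,S_2$ meeting in exactly two points such that both ends of each orientable loop lie in the interior of one $S_i$ and each non-orientable loop has one end in the interior of each of $S_1,S_2$. A connected ribbon graph is pseudo-orientable if $\mathbb{G}^X$ is a pseudo-orientable bouquet for some quasi-tree $X$; a general one is pseudo-orientable if one component is pseudo-orientable and all others are orientable. *)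

theory Defs
  imports Main
begin

text \<open>
Combinatorial model of ribbon graphs: graph-encoded maps (flag systems).
A ribbon graph is a finite set of flags with three fixed-point-free
involutions tau0 (change vertex-end, keep edge and side),
tau1 (change edge, keep vertex and corner), tau2 (change side, keep vertex and edge),
with tau0 tau2 = tau2 tau0 fixed-point-free, together with a number of
isolated vertices (vertices with no incident edges, which carry no flags).
Vertices = orbits of tau1,tau2; edges = orbits of tau0,tau2;
boundary components = orbits of tau0,tau1 (plus one per isolated vertex).
\<close>

record 'f rgraph =
  fl   :: "'f set"
  tau0 :: "'f \<Rightarrow> 'f"
  tau1 :: "'f \<Rightarrow> 'f"
  tau2 :: "'f \<Rightarrow> 'f"
  niso :: nat

definition nonempty_rg :: "'f rgraph \<Rightarrow> bool" where
  "nonempty_rg G \<longleftrightarrow> fl G \<noteq> {} \<or> niso G > 0"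

definition rg :: "'f rgraph \<Rightarrow> bool" where
  "rg G \<longleftrightarrow> finite (fl G) \<and> nonempty_rg G \<and>
     (\<forall>x\<in>fl G.
        tau0 G x \<in> fl G \<and> tau1 G x \<in> fl G \<and> tau2 G x \<in> fl G \<and>
        tau0 G (tau0 G x) = x \<and> tau1 G (tau1 G x) = x \<and> tau2 G (tau2 G x) = x \<and>
        tau0 G x \<noteq> x \<and> tau1 G x \<noteq> x \<and> tau2 G x \<noteq> x \<and>
        tau0 G (tau2 G x) = tau2 G (tau0 G x) \<and> tau0 G (tau2 G x) \<noteq> x)"

definition orb :: "'f rgraph \<Rightarrow> ('f \<Rightarrow> 'f) set \<Rightarrow> 'f \<Rightarrow> 'f set" where
  "orb G ts x = {y. (\<lambda>a b. a \<in> fl G \<and> (\<exists>t\<in>ts. b = t a))\<^sup>*\<^sup>* x y}"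

definition vertex_of :: "'f rgraph \<Rightarrow> 'f \<Rightarrow> 'f set" where
  "vertex_of G x = orb G {tau1 G, tau2 G} x"

definition edge_of :: "'f rgraph \<Rightarrow> 'f \<Rightarrow> 'f set" where
  "edge_of G x = {x, tau0 G x, tau2 G x, tau0 G (tau2 G x)}"

definition edges :: "'f rgraph \<Rightarrow> 'f set set" where
  "edges G = {edge_of G x | x. x \<in> fl G}"

definition nverts :: "'f rgraph \<Rightarrow> nat" where
  "nverts G = card {vertex_of G x | x. x \<in> fl G} + niso G"

definition nbound :: "'f rgraph \<Rightarrow> nat" where
  "nbound G = card {orb G {tau0 G, tau1 G} x | x. x \<in> fl G} + niso G"

text \<open>Deletion of a set Y of edges; vertices all of whose edges are deleted become isolated.\<close>
definition del_edges :: "'f rgraph \<Rightarrow> 'f set set \<Rightarrow> 'f rgraph" where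
  "del_edges G Y =
     (let F' = fl G - \<Union>Y;
          newiso = card {vertex_of G x | x. x \<in> fl G \<and> vertex_of G x \<subseteq> \<Union>Y}
      in G\<lparr> fl := F',
            tau1 := (\<lambda>x. tau1 G (((tau2 G \<circ> tau1 G) ^^
                        (LEAST k. tau1 G (((tau2 G \<circ> tau1 G) ^^ k) x) \<in> F')) x)),
            niso := niso G + newiso \<rparr>)"

definition del_vertex :: "'f rgraph \<Rightarrow> 'f \<Rightarrow> 'f rgraph" where
  "del_vertex G x =
     (let H = del_edges G {e \<in> edges G. e \<inter> vertex_of G x \<noteq> {}}
      in H\<lparr> niso := niso H - 1 \<rparr>)"

definition pdual :: "'f rgraph \<Rightarrow> 'f set set \<Rightarrow> 'f rgraph" where
  "pdual G X = G\<lparr> tau0 := (\<lambda>x. if x \<in> \<Union>X then tau2 G x else tau0 G x),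
                  tau2 := (\<lambda>x. if x \<in> \<Union>X then tau0 G x else tau2 G x) \<rparr>"

definition orientable :: "'f rgraph \<Rightarrow> bool" where
  "orientable G \<longleftrightarrow> (\<exists>c :: 'f \<Rightarrow> bool. \<forall>x\<in>fl G.
      c (tau0 G x) \<noteq> c x \<and> c (tau1 G x) \<noteq> c x \<and> c (tau2 G x) \<noteq> c x)"

definition fcomps :: "'f rgraph \<Rightarrow> 'f set set" where
  "fcomps G = {orb G {tau0 G, tau1 G, tau2 G} x | x. x \<in> fl G}"

definition restr :: "'f rgraph \<Rightarrow> 'f set \<Rightarrow> 'f rgraph" where
  "restr G C = G\<lparr> fl := C, niso := 0 \<rparr>"

definition isov :: "'f rgraph \<Rightarrow> 'f rgraph" where
  "isov G = G\<lparr> fl := {}, niso := 1 \<rparr>"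

definition bouquet :: "'f rgraph \<Rightarrow> bool" where
  "bouquet G \<longleftrightarrow> nverts G = 1"

definition loop_sub :: "'f rgraph \<Rightarrow> 'f \<Rightarrow> 'f rgraph" where
  "loop_sub G x = del_edges G (edges G - {edge_of G x})"

text \<open>Pseudo-orientable bouquet: the edge-ends around the vertex are labelled by the
  arc S1/S2 (s) containing them; the labelling changes at no more than two corners
  (so S1, S2 are arcs meeting in two points), orientable loops have both ends on the
  same arc and non-orientable loops have one end on each arc.\<close>
definition po_bouquet :: "'f rgraph \<Rightarrow> bool" where
  "po_bouquet G \<longleftrightarrow> bouquet G \<and>
     (\<exists>s :: 'f \<Rightarrow> bool.
        (\<forall>x\<in>fl G. s (tau2 G x) = s x) \<and>
        card {{x, tau1 G x} | x. x \<in> fl G \<and> s x \<noteq> s (tau1 G x)} \<le> 2 \<and>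
        (\<forall>x\<in>fl G. (orientable (loop_sub G x) \<longrightarrow> s (tau0 G x) = s x) \<and>
                   (\<not> orientable (loop_sub G x) \<longrightarrow> s (tau0 G x) \<noteq> s x)))"

text \<open>Quasi-tree of a connected ribbon graph: spanning subgraph (V,X) has one boundary component.\<close>
definition qtree_conn :: "'f rgraph \<Rightarrow> 'f set set \<Rightarrow> bool" where
  "qtree_conn G X \<longleftrightarrow> X \<subseteq> edges G \<and> nbound (del_edges G (edges G - X)) = 1"

definition po_conn :: "'f rgraph \<Rightarrow> bool" where
  "po_conn G \<longleftrightarrow> (\<exists>X. qtree_conn G X \<and> po_bouquet (pdual G X))"

text \<open>General: one component pseudo-orientable, all others orientable.
  (Isolated-vertex components are trivially orientable.)\<close>
definition pseudo_orientable :: "'f rgraph \<Rightarrow> bool" where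
  "pseudo_orientable G \<longleftrightarrow>
     (\<exists>C\<in>fcomps G. po_conn (restr G C) \<and>
        (\<forall>D\<in>fcomps G. D \<noteq> C \<longrightarrow> orientable (restr G D))) \<or>
     (niso G > 0 \<and> po_conn (isov G) \<and> (\<forall>D\<in>fcomps G. orientable (restr G D)))"

inductive minor_step :: "'f rgraph \<Rightarrow> 'f rgraph \<Rightarrow> bool" where
  del_edge: "rg G \<Longrightarrow> e \<in> edges G \<Longrightarrow> minor_step G (del_edges G {e})"
| del_vert: "rg G \<Longrightarrow> x \<in> fl G \<Longrightarrow> nonempty_rg (del_vertex G x) \<Longrightarrow>
             minor_step G (del_vertex G x)"
| del_isov: "rg G \<Longrightarrow> niso G > 0 \<Longrightarrow> nonempty_rg (G\<lparr>niso := niso G - 1\<rparr>) \<Longrightarrow>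
             minor_step G (G\<lparr>niso := niso G - 1\<rparr>)"
| pdual: "rg G \<Longrightarrow> X \<subseteq> edges G \<Longrightarrow> minor_step G (pdual G X)"

end

theory Submission
  imports Defs
begin


definition orbs :: "'f set \<Rightarrow> ('f \<Rightarrow> 'f) set \<Rightarrow> 'f \<Rightarrow> 'f set" where
  "orbs F ts x = {y. (\<lambda>a b. a \<in> F \<and> (\<exists>t\<in>ts. b = t a))\<^sup>*\<^sup>* x y}"

lemma orb_eq: "orb G ts = orbs (fl G) ts"
  by (simp add: orb_def orbs_def fun_eq_iff)

definition invol :: "'f set \<Rightarrow> ('f \<Rightarrow> 'f) \<Rightarrow> bool" where
  "invol F f \<longleftrightarrow> (\<forall>x\<in>F. f x \<in> F \<and> f (f x) = x \<and> f x \<noteq> x)"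

lemma orbs_self: "x \<in> orbs F ts x"
  by (simp add: orbs_def)

lemma orbs_step: "y \<in> orbs F ts x \<Longrightarrow> y \<in> F \<Longrightarrow> t \<in> ts \<Longrightarrow> t y \<in> orbs F ts x"
  unfolding orbs_def by (auto intro: rtranclp.rtrancl_into_rtrancl)

lemma orbs_sub:
  assumes "x \<in> S" "\<And>a t. a \<in> S \<Longrightarrow> a \<in> F \<Longrightarrow> t \<in> ts \<Longrightarrow> t a \<in> S"
  shows "orbs F ts x \<subseteq> S"
proof
  fix y assume "y \<in> orbs F ts x"
  hence "(\<lambda>a b. a \<in> F \<and> (\<exists>t\<in>ts. b = t a))\<^sup>*\<^sup>* x y" by (simp add: orbs_def)
  thus "y \<in> S"
    by (induction rule: rtranclp_induct) (use assms in auto)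
qed

lemma orbs_subF: "x \<in> F \<Longrightarrow> (\<And>t a. t \<in> ts \<Longrightarrow> a \<in> F \<Longrightarrow> t a \<in> F) \<Longrightarrow> orbs F ts x \<subseteq> F"
  by (rule orbs_sub) auto

lemma orbs_trans: "y \<in> orbs F ts x \<Longrightarrow> orbs F ts y \<subseteq> orbs F ts x"
  by (rule orbs_sub) (auto intro: orbs_step)

lemma orbs_sym:
  assumes inv: "\<And>t. t \<in> ts \<Longrightarrow> invol F t" and x: "x \<in> F" and y: "y \<in> orbs F ts x"
  shows "x \<in> orbs F ts y"
proof -
  have "(\<lambda>a b. a \<in> F \<and> (\<exists>t\<in>ts. b = t a))\<^sup>*\<^sup>* x y" using y by (simp add: orbs_def)
  hence "x \<in> orbs F ts y \<and> y \<in> F"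
  proof (induction rule: rtranclp_induct)
    case base then show ?case using x by (simp add: orbs_self)
  next
    case (step b c)
    then obtain t where t: "t \<in> ts" "c = t b" "b \<in> F" by auto
    have "invol F t" using inv t by auto
    hence cF: "c \<in> F" and tc: "t c = b" using t by (auto simp: invol_def)
    have "b \<in> orbs F ts c" using orbs_step[OF orbs_self[of c F ts] cF t(1)] tc by simp
    hence "orbs F ts b \<subseteq> orbs F ts c" by (rule orbs_trans)
    then show ?case using step cF by auto
  qed
  thus ?thesis by simp
qed

lemma orbs_eq:
  assumes inv: "\<And>t. t \<in> ts \<Longrightarrow> invol F t" and x: "x \<in> F" and y: "y \<in> orbs F ts x"
  shows "orbs F ts y = orbs F ts x"
  using orbs_trans[OF y] orbs_trans[OF orbs_sym[OF inv x y]] by blast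

lemma orbs_cong:
  assumes "\<And>a b. a \<in> F \<Longrightarrow> (\<exists>t\<in>ts. b = t a) \<longleftrightarrow> (\<exists>t\<in>ts'. b = t a)"
  shows "orbs F ts = orbs F ts'"
proof -
  have "(\<lambda>a b. a \<in> F \<and> (\<exists>t\<in>ts. b = t a)) = (\<lambda>a b. a \<in> F \<and> (\<exists>t\<in>ts'. b = t a))"
    using assms by (auto simp: fun_eq_iff)
  thus ?thesis by (simp add: orbs_def fun_eq_iff)
qed

lemma orbs_mem_F:
  assumes "\<And>t. t \<in> ts \<Longrightarrow> invol F t" "x \<in> F"
  shows "orbs F ts x \<subseteq> F"
  using assms by (intro orbs_subF) (auto simp: invol_def)

definition ret :: "('f \<Rightarrow> 'f) \<Rightarrow> ('f \<Rightarrow> 'f) \<Rightarrow> 'f set \<Rightarrow> 'f \<Rightarrow> 'f" where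
  "ret f g A y = f (((g \<circ> f) ^^ (LEAST k. f (((g \<circ> f) ^^ k) y) \<in> A)) y)"

definition kk :: "('f \<Rightarrow> 'f) \<Rightarrow> ('f \<Rightarrow> 'f) \<Rightarrow> 'f set \<Rightarrow> 'f \<Rightarrow> nat" where
  "kk f g A y = (LEAST k. f (((g \<circ> f) ^^ k) y) \<in> A)"

definition pw :: "('f \<Rightarrow> 'f) \<Rightarrow> ('f \<Rightarrow> 'f) \<Rightarrow> nat \<Rightarrow> 'f \<Rightarrow> 'f" where
  "pw f g j y = ((g \<circ> f) ^^ j) y"

lemma pw_0[simp]: "pw f g 0 y = y" by (simp add: pw_def)
lemma pw_Suc[simp]: "pw f g (Suc j) y = g (f (pw f g j y))"
  by (simp add: pw_def)
lemma pw_add: "pw f g (i + j) y = pw f g i (pw f g j y)"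
  by (simp add: pw_def funpow_add)

lemma kk_pw: "kk f g A y = (LEAST k. f (pw f g k y) \<in> A)"
  by (simp add: kk_def pw_def)

lemma ret_kk: "ret f g A y = f (pw f g (kk f g A y) y)"
  by (simp add: ret_def kk_def pw_def)

locale skip =
  fixes F :: "'f set" and f g :: "'f \<Rightarrow> 'f" and A :: "'f set"
  assumes fin: "finite F" and invf: "invol F f" and invg: "invol F g"
    and AF: "A \<subseteq> F" and gA: "\<And>x. x \<in> A \<Longrightarrow> g x \<in> A"
    and gN: "\<And>x. x \<in> F \<Longrightarrow> x \<notin> A \<Longrightarrow> g x \<notin> A"
begin

abbreviation "p \<equiv> pw f g"

lemma fF: "x \<in> F \<Longrightarrow> f x \<in> F" and ff: "x \<in> F \<Longrightarrow> f (f x) = x" and fne: "x \<in> F \<Longrightarrow> f x \<noteq> x"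
  and gF: "x \<in> F \<Longrightarrow> g x \<in> F" and gg: "x \<in> F \<Longrightarrow> g (g x) = x" and gne: "x \<in> F \<Longrightarrow> g x \<noteq> x"
  using invf invg by (auto simp: invol_def)

lemma pF: "y \<in> F \<Longrightarrow> (p j) y \<in> F"
  by (induction j) (auto simp: fF gF)

lemma p_inj: "a \<in> F \<Longrightarrow> b \<in> F \<Longrightarrow> (p j) a = (p j) b \<Longrightarrow> a = b"
proof (induction j)
  case 0 then show ?case by simp
next
  case (Suc j)
  have "g (f ((p j) a)) = g (f ((p j) b))" using Suc.prems by simp
  hence "f ((p j) a) = f ((p j) b)" by (metis gg fF pF Suc.prems(1,2))
  hence "(p j) a = (p j) b" by (metis ff pF Suc.prems(1,2))
  then show ?case using Suc by blast
qed

lemma periodic: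
  assumes y: "y \<in> F" shows "\<exists>n>0. (p n) y = y"
proof -
  let ?h = "\<lambda>i. (p i) y"
  have "?h ` {0..card F} \<subseteq> F" using pF y by auto
  have "\<not> inj_on ?h {0..card F}"
  proof
    assume "inj_on ?h {0..card F}"
    hence "card (?h ` {0..card F}) = card F + 1" by (simp add: card_image)
    moreover have "card (?h ` {0..card F}) \<le> card F"
      using \<open>?h ` {0..card F} \<subseteq> F\<close> fin by (simp add: card_mono)
    ultimately show False by simp
  qed
  then obtain i j where ij: "i \<noteq> j" "(p i) y = (p j) y"
    unfolding inj_on_def by blast
  { fix i j :: nat assume "i < j" "(p i) y = (p j) y"
    hence "(p i) y = (p i) ((p (j - i)) y)"
      by (metis pw_add le_add_diff_inverse less_imp_le)
    hence "y = (p (j - i)) y" using p_inj y pF by blast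
    hence "\<exists>n>0. (p n) y = y" using \<open>i < j\<close> by (metis zero_less_diff) }
  note aux = this
  show ?thesis
  proof (cases "i < j")
    case True then show ?thesis using aux ij by blast
  next
    case False then show ?thesis using aux[of j i] ij by auto
  qed
qed

lemma ex_k: assumes y: "y \<in> A" shows "\<exists>k. f ((p k) y) \<in> A"
proof -
  obtain n where n: "n > 0" "(p n) y = y" using periodic y AF by blast
  then obtain m where m: "n = Suc m" by (cases n) auto
  have "g (f ((p m) y)) = y" using n m by simp
  hence "f ((p m) y) = g y" by (metis gg fF pF y AF subsetD)
  thus ?thesis using gA y by metis
qed

lemma ret_in: "y \<in> A \<Longrightarrow> ret f g A y \<in> A"
  unfolding ret_kk kk_pw by (rule LeastI_ex[OF ex_k])

lemma ret_min: "y \<in> A \<Longrightarrow> j < kk f g A y \<Longrightarrow> f ((p j) y) \<notin> A"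
  unfolding kk_pw by (rule not_less_Least)

lemma ret_walk:
  assumes y: "y \<in> A"
  shows "j \<le> kk f g A y \<Longrightarrow> (p j) (ret f g A y) = f ((p (kk f g A y - j)) y)"
proof (induction j)
  case 0 then show ?case by (simp add: ret_kk)
next
  case (Suc j)
  let ?k = "kk f g A y"
  have yF: "y \<in> F" using y AF by auto
  define m where "m = ?k - Suc j"
  have m: "?k - j = Suc m" using Suc.prems unfolding m_def by simp
  have "(p (Suc j)) (ret f g A y) = g (f (f ((p (?k - j)) y)))"
    using Suc by simp
  also have "\<dots> = g ((p (?k - j)) y)" using ff pF yF by simp
  also have "\<dots> = g (g (f ((p m) y)))" using m by simp
  also have "\<dots> = f ((p m) y)" using gg fF pF yF by simp
  finally show ?case using m unfolding m_def by simp
qed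

lemma ret_ret: assumes y: "y \<in> A" shows "ret f g A (ret f g A y) = y"
proof -
  let ?k = "kk f g A y" and ?z = "ret f g A y"
  have yF: "y \<in> F" using y AF by auto
  have walk: "\<And>j. j \<le> ?k \<Longrightarrow> f ((p j) ?z) = (p (?k - j)) y"
    using ret_walk[OF y] ff pF yF by simp
  have "kk f g A ?z = ?k"
    unfolding kk_pw[of f g A ?z]
  proof (rule Least_equality)
    show "f ((p ?k) ?z) \<in> A" using walk[of ?k] y by simp
  next
    fix j assume j: "f ((p j) ?z) \<in> A"
    show "?k \<le> j"
    proof (rule ccontr)
      assume "\<not> ?k \<le> j"
      hence jk: "j < ?k" by simp
      define m where "m = ?k - Suc j"
      have m: "?k - j = Suc m" "m < ?k" using jk unfolding m_def by auto
      have "f ((p j) ?z) = g (f ((p m) y))" using walk[of j] jk m by simp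
      moreover have "f ((p m) y) \<notin> A" using ret_min[OF y m(2)] .
      moreover have "f ((p m) y) \<in> F" using fF pF yF by simp
      ultimately show False using j gN by simp
    qed
  qed
  thus ?thesis using walk[of ?k] by (simp add: ret_kk)
qed

lemma kk_ret: assumes y: "y \<in> A" shows "kk f g A (ret f g A y) = kk f g A y"
proof -
  let ?k = "kk f g A y" and ?z = "ret f g A y"
  have yF: "y \<in> F" using y AF by auto
  have walk: "\<And>j. j \<le> ?k \<Longrightarrow> f ((p j) ?z) = (p (?k - j)) y"
    using ret_walk[OF y] ff pF yF by simp
  show "kk f g A ?z = ?k"
    unfolding kk_pw[of f g A ?z]
  proof (rule Least_equality)
    show "f ((p ?k) ?z) \<in> A" using walk[of ?k] y by simp
  next
    fix j assume j: "f ((p j) ?z) \<in> A"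
    show "?k \<le> j"
    proof (rule ccontr)
      assume "\<not> ?k \<le> j"
      hence jk: "j < ?k" by simp
      define m where "m = ?k - Suc j"
      have m: "?k - j = Suc m" "m < ?k" using jk unfolding m_def by auto
      have "f ((p j) ?z) = g (f ((p m) y))" using walk[of j] jk m by simp
      moreover have "f ((p m) y) \<notin> A" using ret_min[OF y m(2)] .
      moreover have "f ((p m) y) \<in> F" using fF pF yF by simp
      ultimately show False using j gN by simp
    qed
  qed
qed

lemma ret_neq: assumes y: "y \<in> A" shows "ret f g A y \<noteq> y"
proof
  assume eq: "ret f g A y = y"
  let ?k = "kk f g A y"
  have yF: "y \<in> F" using y AF by auto
  have walk: "(p j) y = f ((p (?k - j)) y)" if "j \<le> ?k" for j
    using ret_walk[OF y that] unfolding eq .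
  define m where "m = ?k div 2"
  have "?k = 2 * m \<or> ?k = 2 * m + 1" unfolding m_def by presburger
  then show False
  proof
    assume "?k = 2 * m"
    hence "(p m) y = f ((p m) y)" using walk[of m] by simp
    thus False using fne pF yF by metis
  next
    assume k: "?k = 2 * m + 1"
    hence "(p m) y = f ((p (Suc m)) y)" using walk[of m] by (simp add: Suc_diff_le)
    hence "f ((p m) y) = f (f (g (f ((p m) y))))" by simp
    hence "f ((p m) y) = g (f ((p m) y))" using ff gF fF pF yF by simp
    thus False using gne fF pF yF by metis
  qed
qed

lemma ret_F: "y \<in> A \<Longrightarrow> ret f g A y \<in> F"
  using ret_in AF by auto

lemma p_orb: "y \<in> F \<Longrightarrow> (p j) y \<in> orbs F {f, g} y"
proof (induction j)
  case 0 then show ?case by (simp add: orbs_self)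
next
  case (Suc j)
  have "f ((p j) y) \<in> orbs F {f, g} y" using Suc pF orbs_step by fastforce
  then show ?case using orbs_step[of "f ((p j) y)" F "{f,g}" y g] fF pF Suc.prems by simp
qed

lemma fp_orb: "y \<in> F \<Longrightarrow> f ((p j) y) \<in> orbs F {f, g} y"
  using p_orb pF orbs_step by fastforce

lemma ret_orb: "y \<in> A \<Longrightarrow> ret f g A y \<in> orbs F {f, g} y"
  using fp_orb AF by (auto simp: ret_kk)

lemma orbs_inter:
  assumes a: "a \<in> A"
  shows "orbs F {f, g} a \<inter> A = orbs A {g, ret f g A} a"
proof
  let ?R = "orbs A {g, ret f g A} a"
  have RA: "?R \<subseteq> A" by (rule orbs_subF) (use a gA ret_in in auto)
  have Rg: "g z \<in> ?R" if "z \<in> ?R" for z using orbs_step[of z A "{g, ret f g A}" a g] RA that by auto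
  have Rr: "ret f g A z \<in> ?R" if "z \<in> ?R" for z using orbs_step[of z A "{g, ret f g A}" a "ret f g A"] RA that by auto
  let ?U = "{(p j) z | z j. z \<in> ?R \<and> j \<le> kk f g A z} \<union> {f ((p j) z) | z j. z \<in> ?R \<and> j \<le> kk f g A z}"
  have "orbs F {f, g} a \<subseteq> ?U"
  proof (rule orbs_sub)
    show "a \<in> ?U" using orbs_self[of a A] by force
  next
    fix u t assume u: "u \<in> ?U" "u \<in> F" "t \<in> {f, g}"
    show "t u \<in> ?U"
    proof (cases "u \<in> {(p j) z | z j. z \<in> ?R \<and> j \<le> kk f g A z}")
      case True
      then obtain z j where zj: "u = (p j) z" "z \<in> ?R" "j \<le> kk f g A z" by blast
      have zF: "z \<in> F" using zj RA AF by auto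
      show ?thesis
      proof (cases "t = f")
        case True then show ?thesis using zj by blast
      next
        case False
        hence t: "t = g" using u by auto
        show ?thesis
        proof (cases j)
          case 0
          hence "t u = (p 0) (g z)" using zj t by simp
          moreover have "g z \<in> ?R" using Rg zj by blast
          ultimately show ?thesis by blast
        next
          case (Suc i)
          hence "t u = f ((p i) z)" using zj t gg fF pF zF by simp
          moreover have "i \<le> kk f g A z" using Suc zj by simp
          ultimately show ?thesis using zj by blast
        qed
      qed
    next
      case False
      then obtain z j where zj: "u = f ((p j) z)" "z \<in> ?R" "j \<le> kk f g A z" using u by blast
      have zF: "z \<in> F" using zj RA AF by auto
      show ?thesis
      proof (cases "t = f")
        case True
        hence "t u = (p j) z" using zj ff pF zF by simp
        then show ?thesis using zj by blast
      next
        case False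
        hence t: "t = g" using u by auto
        show ?thesis
        proof (cases "j < kk f g A z")
          case True
          hence "t u = (p (Suc j)) z" using zj t by simp
          moreover have "Suc j \<le> kk f g A z" using True by simp
          ultimately show ?thesis using zj(2) by blast
        next
          case False
          hence "u = ret f g A z" using zj by (simp add: ret_kk)
          hence "t u = (p 0) (g (ret f g A z))" using t by simp
          moreover have "g (ret f g A z) \<in> ?R" using Rg Rr zj by blast
          ultimately show ?thesis by blast
        qed
      qed
    qed
  qed
  moreover have "?U \<inter> A \<subseteq> ?R"
  proof
    fix u assume u: "u \<in> ?U \<inter> A"
    show "u \<in> ?R"
    proof (cases "u \<in> {(p j) z | z j. z \<in> ?R \<and> j \<le> kk f g A z}")
      case True
      then obtain z j where zj: "u = (p j) z" "z \<in> ?R" "j \<le> kk f g A z" by blast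
      have zF: "z \<in> F" using zj RA AF by auto
      show ?thesis
      proof (cases j)
        case 0 then show ?thesis using zj by simp
      next
        case (Suc i)
        hence "u = g (f ((p i) z))" using zj by simp
        moreover have "f ((p i) z) \<notin> A" using ret_min Suc zj RA by auto
        ultimately have "u \<notin> A" using gN fF pF zF by simp
        then show ?thesis using u by simp
      qed
    next
      case False
      then obtain z j where zj: "u = f ((p j) z)" "z \<in> ?R" "j \<le> kk f g A z" using u by blast
      show ?thesis
      proof (cases "j < kk f g A z")
        case True then show ?thesis using ret_min zj RA u by auto
      next
        case False
        hence "u = ret f g A z" using zj by (simp add: ret_kk)
        then show ?thesis using Rr zj by simp
      qed
    qed
  qed
  ultimately show "orbs F {f, g} a \<inter> A \<subseteq> ?R" by blast
next
  show "orbs A {g, ret f g A} a \<subseteq> orbs F {f, g} a \<inter> A"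
  proof (rule orbs_sub)
    show "a \<in> orbs F {f, g} a \<inter> A" using a orbs_self by fast
  next
    fix b t assume b: "b \<in> orbs F {f, g} a \<inter> A" "b \<in> A" "t \<in> {g, ret f g A}"
    show "t b \<in> orbs F {f, g} a \<inter> A"
    proof (cases "t = g")
      case True then show ?thesis using b orbs_step gA AF by fastforce
    next
      case False
      hence "t = ret f g A" using b by auto
      then show ?thesis using ret_orb[of b] orbs_trans[of b F "{f,g}" a] b ret_in by auto
    qed
  qed
qed

lemma invol_ret: "invol A (ret f g A)"
  unfolding invol_def using ret_in ret_ret ret_neq by auto

lemma invol_gA: "invol A g"
  unfolding invol_def using gA gg gne AF by auto

lemma count:
  "card {orbs F {f, g} x | x. x \<in> F} =
   card {orbs A {g, ret f g A} x | x. x \<in> A} +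
   card {orbs F {f, g} x | x. x \<in> F \<and> orbs F {f, g} x \<subseteq> F - A}"
proof -
  have inv2: "\<And>t. t \<in> {f, g} \<Longrightarrow> invol F t" using invf invg by auto
  let ?VA = "{orbs F {f, g} x | x. x \<in> A}"
  let ?VN = "{orbs F {f, g} x | x. x \<in> F \<and> orbs F {f, g} x \<subseteq> F - A}"
  have split: "{orbs F {f, g} x | x. x \<in> F} = ?VA \<union> ?VN"
  proof (rule set_eqI, rule iffI)
    fix Q assume "Q \<in> {orbs F {f, g} x | x. x \<in> F}"
    then obtain x where x: "Q = orbs F {f,g} x" "x \<in> F" by blast
    show "Q \<in> ?VA \<union> ?VN"
    proof (cases "Q \<subseteq> F - A")
      case True then show ?thesis using x by blast
    next
      case False
      then obtain a where a: "a \<in> Q" "a \<in> A" using orbs_mem_F[OF inv2 x(2)] x by blast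
      hence "Q = orbs F {f,g} a" using orbs_eq[OF inv2 x(2)] x by metis
      then show ?thesis using a by blast
    qed
  qed (use AF in auto)
  have disj: "?VA \<inter> ?VN = {}"
  proof -
    { fix Q assume "Q \<in> ?VA" "Q \<in> ?VN"
      then obtain a where "Q = orbs F {f,g} a" "a \<in> A" by blast
      hence "a \<in> Q" using orbs_self by fast
      hence False using \<open>Q \<in> ?VN\<close> \<open>a \<in> A\<close> by blast }
    thus ?thesis by blast
  qed
  have finVA: "finite ?VA" using fin AF
    by (metis (no_types) Setcompr_eq_image finite_imageI finite_subset)
  have finVN: "finite ?VN"
  proof -
    have "?VN \<subseteq> (orbs F {f,g}) ` F" by blast
    thus ?thesis using fin finite_subset by blast
  qed
  have inj: "inj_on (\<lambda>Q. Q \<inter> A) ?VA"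
  proof (rule inj_onI)
    fix Q Q2 assume Q: "Q \<in> ?VA" "Q2 \<in> ?VA" "Q \<inter> A = Q2 \<inter> A"
    then obtain a a' where aa: "Q = orbs F {f,g} a" "a \<in> A" "Q2 = orbs F {f,g} a'" "a' \<in> A" by blast
    have "a \<in> Q2 " using Q aa orbs_self by fast
    have "orbs F {f,g} a = orbs F {f,g} a'" by (rule orbs_eq[OF inv2]) (use aa AF \<open>a \<in> Q2\<close> in auto)
    thus "Q = Q2" using aa by simp
  qed
  have img: "(\<lambda>Q. Q \<inter> A) ` ?VA = {orbs A {g, ret f g A} x | x. x \<in> A}"
  proof -
    have "(\<lambda>Q. Q \<inter> A) ` ?VA = (\<lambda>x. orbs F {f,g} x \<inter> A) ` A" by blast
    also have "\<dots> = (\<lambda>x. orbs A {g, ret f g A} x) ` A" using orbs_inter by (intro image_cong) auto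
    also have "\<dots> = {orbs A {g, ret f g A} x | x. x \<in> A}" by blast
    finally show ?thesis .
  qed
  have c1: "card ?VA = card {orbs A {g, ret f g A} x | x. x \<in> A}"
    using card_image[OF inj] unfolding img by simp
  have "card (?VA \<union> ?VN) = card ?VA + card ?VN" by (rule card_Un_disjoint[OF finVA finVN disj])
  thus ?thesis unfolding split c1 .
qed

end



lemma bool3: "(a::bool) \<noteq> b \<Longrightarrow> b \<noteq> c \<Longrightarrow> a = c" by auto

context skip
begin

lemma walk_uniq_aux:
  assumes x: "x \<in> A" and x': "x' \<in> A" and jj: "j \<le> j'" and j': "j' \<le> kk f g A x'"
    and eq: "p j x = p j' x'"
  shows "x = x'"
proof -
  define d where "d = j' - j"
  have "j' = j + d" using jj unfolding d_def by simp
  hence "p j' x' = p j (p d x')" by (simp add: pw_add)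
  hence "p j x = p j (p d x')" using eq by simp
  hence xd: "x = p d x'" using p_inj x x' AF pF by (meson subsetD)
  show ?thesis
  proof (cases d)
    case 0 then show ?thesis using xd by simp
  next
    case (Suc e)
    have "e < kk f g A x'" using Suc j' \<open>j' = j + d\<close> by simp
    hence "f (p e x') \<notin> A" using ret_min x' by blast
    moreover have "f (p e x') \<in> F" using fF pF x' AF by auto
    ultimately have "g (f (p e x')) \<notin> A" using gN by blast
    then show ?thesis using xd Suc x by simp
  qed
qed

lemma walk_uniq:
  assumes "x \<in> A" "x' \<in> A" "j \<le> kk f g A x" "j' \<le> kk f g A x'" "p j x = p j' x'"
  shows "x = x'"
proof (cases "j \<le> j'")
  case True then show ?thesis using walk_uniq_aux assms by blast
next
  case False then show ?thesis using walk_uniq_aux[of x' x j' j] assms by simp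
qed

lemma corner_uniq:
  assumes x: "x \<in> A" and x': "x' \<in> A" and j: "j \<le> kk f g A x" and j': "j' \<le> kk f g A x'"
    and eq: "{p j x, f (p j x)} = {p j' x', f (p j' x')}"
  shows "{x, ret f g A x} = {x', ret f g A x'}"
proof -
  have "p j x = p j' x' \<or> p j x = f (p j' x')" using eq by (auto simp: doubleton_eq_iff)
  then show ?thesis
  proof
    assume "p j x = p j' x'"
    then show ?thesis using walk_uniq assms by metis
  next
    assume h: "p j x = f (p j' x')"
    let ?z = "ret f g A x'" and ?k = "kk f g A x'"
    have "p (?k - j') ?z = f (p (?k - (?k - j')) x')" using ret_walk[OF x'] by simp
    also have "?k - (?k - j') = j'" using j' by simp
    finally have "p j x = p (?k - j') ?z" using h by simp
    moreover have "?k - j' \<le> kk f g A ?z" using kk_ret[OF x'] by simp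
    ultimately have "x = ?z" using walk_uniq[OF x ret_in[OF x'] j] by metis
    then show ?thesis using ret_ret[OF x'] by auto
  qed
qed

lemma defect_exists:
  fixes c :: "'f \<Rightarrow> bool"
  assumes cg: "\<And>y. y \<in> F \<Longrightarrow> c (g y) \<noteq> c y" and x: "x \<in> A"
    and d: "c (ret f g A x) = c x"
  shows "\<exists>j \<le> kk f g A x. c (f (p j x)) = c (p j x)"
proof (rule ccontr)
  assume "\<not> ?thesis"
  hence nd: "\<And>j. j \<le> kk f g A x \<Longrightarrow> c (f (p j x)) \<noteq> c (p j x)" by blast
  have xF: "x \<in> F" using x AF by auto
  have "j \<le> kk f g A x \<Longrightarrow> c (p j x) = c x" for j
  proof (induction j)
    case 0 then show ?case by simp
  next
    case (Suc j)
    have A1: "c (g (f (p j x))) \<noteq> c (f (p j x))" using cg fF pF xF by blast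
    have A2: "c (f (p j x)) \<noteq> c (p j x)" using nd[of j] Suc.prems by simp
    have "c (g (f (p j x))) = c (p j x)" by (rule bool3[OF A1 A2])
    then show ?case using Suc by simp
  qed
  hence "c (p (kk f g A x) x) = c x" by simp
  moreover have "c (f (p (kk f g A x) x)) \<noteq> c (p (kk f g A x) x)" using nd by simp
  ultimately show False using d by (simp add: ret_kk)
qed

lemma defect_mono:
  fixes c :: "'f \<Rightarrow> bool"
  assumes cg: "\<And>y. y \<in> F \<Longrightarrow> c (g y) \<noteq> c y"
  shows "card {{x, ret f g A x} | x. x \<in> A \<and> c (ret f g A x) = c x}
       \<le> card {{x, f x} | x. x \<in> F \<and> c (f x) = c x}"
proof -
  let ?N = "{{x, ret f g A x} | x. x \<in> A \<and> c (ret f g A x) = c x}"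
  let ?O = "{{x, f x} | x. x \<in> F \<and> c (f x) = c x}"
  define h where "h N = (SOME P. \<exists>x j. x \<in> A \<and> N = {x, ret f g A x} \<and> j \<le> kk f g A x \<and>
        P = {p j x, f (p j x)} \<and> c (f (p j x)) = c (p j x))" for N
  have hN: "\<exists>x j. x \<in> A \<and> N = {x, ret f g A x} \<and> j \<le> kk f g A x \<and>
        h N = {p j x, f (p j x)} \<and> c (f (p j x)) = c (p j x)" if NN: "N \<in> ?N" for N
  proof -
    obtain x where x: "x \<in> A" "N = {x, ret f g A x}" "c (ret f g A x) = c x" using NN by blast
    obtain j where j: "j \<le> kk f g A x" "c (f (p j x)) = c (p j x)" using defect_exists[OF cg x(1) x(3)] by blast
    have "\<exists>P x j. x \<in> A \<and> N = {x, ret f g A x} \<and> j \<le> kk f g A x \<and>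
        P = {p j x, f (p j x)} \<and> c (f (p j x)) = c (p j x)" using x j by blast
    hence "\<exists>x j. x \<in> A \<and> N = {x, ret f g A x} \<and> j \<le> kk f g A x \<and>
        (SOME P. \<exists>x j. x \<in> A \<and> N = {x, ret f g A x} \<and> j \<le> kk f g A x \<and>
        P = {p j x, f (p j x)} \<and> c (f (p j x)) = c (p j x)) = {p j x, f (p j x)} \<and> c (f (p j x)) = c (p j x)"
      by (rule someI_ex[where P = "\<lambda>P. \<exists>x j. x \<in> A \<and> N = {x, ret f g A x} \<and> j \<le> kk f g A x \<and>
        P = {p j x, f (p j x)} \<and> c (f (p j x)) = c (p j x)"]) 
    thus ?thesis unfolding h_def .
  qed
  have img: "h ` ?N \<subseteq> ?O"
  proof
    fix P assume "P \<in> h ` ?N"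
    then obtain N where N: "N \<in> ?N" "P = h N" by blast
    obtain x j where "x \<in> A" "h N = {p j x, f (p j x)}" "c (f (p j x)) = c (p j x)" using hN[OF N(1)] by blast
    moreover have "p j x \<in> F" using pF \<open>x \<in> A\<close> AF by auto
    ultimately show "P \<in> ?O" using N by blast
  qed
  have inj: "inj_on h ?N"
  proof (rule inj_onI)
    fix N N' assume N: "N \<in> ?N" "N' \<in> ?N" "h N = h N'"
    obtain x j where a: "x \<in> A" "N = {x, ret f g A x}" "j \<le> kk f g A x" "h N = {p j x, f (p j x)}" using hN[OF N(1)] by blast
    obtain x' j' where b: "x' \<in> A" "N' = {x', ret f g A x'}" "j' \<le> kk f g A x'" "h N' = {p j' x', f (p j' x')}" using hN[OF N(2)] by blast
    show "N = N'" using corner_uniq[OF a(1) b(1) a(3) b(3)] a b N(3) by simp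
  qed
  have finO: "finite ?O"
  proof -
    have "?O \<subseteq> (\<lambda>x. {x, f x}) ` F" by blast
    thus ?thesis using fin finite_subset by blast
  qed
  show ?thesis using card_inj_on_le[OF inj img finO] .
qed

end



definition rgf :: "'f rgraph \<Rightarrow> bool" where
  "rgf G \<longleftrightarrow> finite (fl G) \<and>
     (\<forall>x\<in>fl G.
        tau0 G x \<in> fl G \<and> tau1 G x \<in> fl G \<and> tau2 G x \<in> fl G \<and>
        tau0 G (tau0 G x) = x \<and> tau1 G (tau1 G x) = x \<and> tau2 G (tau2 G x) = x \<and>
        tau0 G x \<noteq> x \<and> tau1 G x \<noteq> x \<and> tau2 G x \<noteq> x \<and>
        tau0 G (tau2 G x) = tau2 G (tau0 G x) \<and> tau0 G (tau2 G x) \<noteq> x)"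

lemma rg_iff: "rg G \<longleftrightarrow> rgf G \<and> nonempty_rg G"
  unfolding rg_def rgf_def by blast

lemma rgf_niso[simp]: "rgf (G\<lparr>niso := n\<rparr>) = rgf G"
  unfolding rgf_def by simp

lemma rgfD:
  assumes "rgf G" "x \<in> fl G"
  shows "tau0 G x \<in> fl G" "tau1 G x \<in> fl G" "tau2 G x \<in> fl G"
    "tau0 G (tau0 G x) = x" "tau1 G (tau1 G x) = x" "tau2 G (tau2 G x) = x"
    "tau0 G x \<noteq> x" "tau1 G x \<noteq> x" "tau2 G x \<noteq> x"
    "tau0 G (tau2 G x) = tau2 G (tau0 G x)" "tau0 G (tau2 G x) \<noteq> x"
  using assms by (auto simp: rgf_def)

lemma rgf_fin: "rgf G \<Longrightarrow> finite (fl G)" by (simp add: rgf_def)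

lemma rgf_invol:
  assumes "rgf G"
  shows "invol (fl G) (tau0 G)" "invol (fl G) (tau1 G)" "invol (fl G) (tau2 G)"
  using rgfD[OF assms] by (auto simp: invol_def)

lemma rgf_extra:
  assumes "rgf G" "x \<in> fl G"
  shows "tau2 G (tau0 G (tau2 G x)) = tau0 G x" "tau0 G (tau2 G (tau0 G x)) = tau2 G x"
    "tau0 G (tau0 G (tau2 G x)) = tau2 G x" "tau2 G (tau2 G (tau0 G x)) = tau0 G x"
    "tau0 G (tau2 G x) \<in> fl G" "tau2 G (tau0 G x) \<noteq> x"
    "tau0 G x \<noteq> tau2 G x"
proof -
  note r = rgfD[OF assms]
  have t0F: "tau0 G x \<in> fl G" and t2F: "tau2 G x \<in> fl G" using r by auto
  note r0 = rgfD[OF assms(1) t0F] and r2 = rgfD[OF assms(1) t2F]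
  show "tau2 G (tau0 G (tau2 G x)) = tau0 G x" using r r0 by metis
  show "tau0 G (tau2 G (tau0 G x)) = tau2 G x" using r r2 by metis
  show "tau0 G (tau0 G (tau2 G x)) = tau2 G x" using r2 by metis
  show "tau2 G (tau2 G (tau0 G x)) = tau0 G x" using r0 by metis
  show "tau0 G (tau2 G x) \<in> fl G" using r2 by metis
  show "tau2 G (tau0 G x) \<noteq> x" using r by metis
  show "tau0 G x \<noteq> tau2 G x" using r by metis
qed

lemma edge_sub: assumes "rgf G" "x \<in> fl G" shows "edge_of G x \<subseteq> fl G"
  using rgfD[OF assms] rgf_extra[OF assms] assms(2) by (auto simp: edge_of_def)

lemma edge_self: "x \<in> edge_of G x" by (simp add: edge_of_def)

lemma edge_t0: assumes "rgf G" "x \<in> fl G" "y \<in> edge_of G x" shows "tau0 G y \<in> edge_of G x"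
  using rgfD[OF assms(1,2)] rgf_extra[OF assms(1,2)] assms(3) by (auto simp: edge_of_def)

lemma edge_t2: assumes "rgf G" "x \<in> fl G" "y \<in> edge_of G x" shows "tau2 G y \<in> edge_of G x"
  using rgfD[OF assms(1,2)] rgf_extra[OF assms(1,2)] assms(3) by (auto simp: edge_of_def)

lemma edge_same:
  assumes "rgf G" "x \<in> fl G" "y \<in> edge_of G x"
  shows "edge_of G y = edge_of G x"
proof -
  note r = rgfD[OF assms(1,2)] and e = rgf_extra[OF assms(1,2)]
  have "y = x \<or> y = tau0 G x \<or> y = tau2 G x \<or> y = tau0 G (tau2 G x)"
    using assms(3) by (auto simp: edge_of_def)
  then show ?thesis
    using r e by (elim disjE) (auto simp: edge_of_def)
qed

lemma edges_disj:
  assumes "rgf G" "e \<in> edges G" "e' \<in> edges G" "y \<in> e" "y \<in> e'"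
  shows "e = e'"
proof -
  obtain x x' where "e = edge_of G x" "x \<in> fl G" "e' = edge_of G x'" "x' \<in> fl G"
    using assms(2,3) by (auto simp: edges_def)
  thus ?thesis using edge_same[OF assms(1)] assms(4,5) by metis
qed

lemma edges_sub: assumes "rgf G" "e \<in> edges G" shows "e \<subseteq> fl G"
proof -
  obtain x where "e = edge_of G x" "x \<in> fl G" using assms(2) by (auto simp: edges_def)
  thus ?thesis using edge_sub[OF assms(1)] by simp
qed

lemma edge_in_edges: "x \<in> fl G \<Longrightarrow> edge_of G x \<in> edges G"
  by (auto simp: edges_def)

lemma Union_edges: "rgf G \<Longrightarrow> \<Union>(edges G) = fl G"
  using edges_sub edge_in_edges edge_self by fastforce

lemma UY_closed:
  assumes "rgf G" "Y \<subseteq> edges G" "y \<in> \<Union>Y"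
  shows "tau0 G y \<in> \<Union>Y" "tau2 G y \<in> \<Union>Y"
proof -
  obtain e where e: "e \<in> Y" "y \<in> e" using assms by blast
  then obtain x where x: "e = edge_of G x" "x \<in> fl G" using assms(2) by (auto simp: edges_def)
  show "tau0 G y \<in> \<Union>Y" using edge_t0[OF assms(1) x(2)] e x by blast
  show "tau2 G y \<in> \<Union>Y" using edge_t2[OF assms(1) x(2)] e x by blast
qed

lemma UY_compl:
  assumes "rgf G" "Y \<subseteq> edges G" "y \<in> fl G" "y \<notin> \<Union>Y"
  shows "tau0 G y \<notin> \<Union>Y" "tau2 G y \<notin> \<Union>Y"
  using UY_closed[OF assms(1,2)] rgfD[OF assms(1,3)] assms(4) by metis+

lemma skip_del:
  assumes "rgf G" "Y \<subseteq> edges G"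
  shows "skip (fl G) (tau1 G) (tau2 G) (fl G - \<Union>Y)"
  using rgf_fin[OF assms(1)] rgf_invol[OF assms(1)] UY_closed[OF assms] UY_compl[OF assms] rgfD[OF assms(1)]
  by unfold_locales auto

lemma del_fields:
  "fl (del_edges G Y) = fl G - \<Union>Y"
  "tau0 (del_edges G Y) = tau0 G"
  "tau2 (del_edges G Y) = tau2 G"
  "tau1 (del_edges G Y) = ret (tau1 G) (tau2 G) (fl G - \<Union>Y)"
  "niso (del_edges G Y) = niso G + card {vertex_of G x | x. x \<in> fl G \<and> vertex_of G x \<subseteq> \<Union>Y}"
  by (simp_all add: del_edges_def Let_def ret_def fun_eq_iff)

lemma rgf_del:
  assumes "rgf G" "Y \<subseteq> edges G"
  shows "rgf (del_edges G Y)"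
proof -
  interpret skip "fl G" "tau1 G" "tau2 G" "fl G - \<Union>Y" by (rule skip_del[OF assms])
  show ?thesis
    unfolding rgf_def del_fields
    using rgf_fin[OF assms(1)] rgfD[OF assms(1)] UY_compl[OF assms] ret_in ret_ret ret_neq
    by auto
qed

lemma vertex_sub: "rgf G \<Longrightarrow> x \<in> fl G \<Longrightarrow> vertex_of G x \<subseteq> fl G"
  unfolding vertex_of_def orb_eq using rgf_invol by (intro orbs_mem_F) auto

lemma nonempty_del:
  assumes "rg G" "Y \<subseteq> edges G"
  shows "nonempty_rg (del_edges G Y)"
proof (cases "fl G - \<Union>Y = {}")
  case False then show ?thesis by (simp add: nonempty_rg_def del_fields)
next
  case True
  show ?thesis
  proof (cases "fl G = {}")
    case True then show ?thesis using assms(1) by (simp add: nonempty_rg_def del_fields rg_def)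
  next
    case False
    then obtain x where x: "x \<in> fl G" by blast
    have rf: "rgf G" using assms(1) rg_iff by blast
    let ?S = "{vertex_of G x | x. x \<in> fl G \<and> vertex_of G x \<subseteq> \<Union>Y}"
    have "vertex_of G x \<in> ?S" using vertex_sub[OF rf x] True x by blast
    moreover have "finite ?S"
    proof -
      have "?S \<subseteq> vertex_of G ` fl G" by blast
      thus ?thesis using rgf_fin[OF rf] finite_subset by blast
    qed
    ultimately have "card ?S > 0" by (auto simp: card_gt_0_iff)
    then show ?thesis by (simp add: nonempty_rg_def del_fields)
  qed
qed

lemma pdual_fields:
  "fl (pdual G X) = fl G" "tau1 (pdual G X) = tau1 G" "niso (pdual G X) = niso G"
  "tau0 (pdual G X) = (\<lambda>x. if x \<in> \<Union>X then tau2 G x else tau0 G x)"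
  "tau2 (pdual G X) = (\<lambda>x. if x \<in> \<Union>X then tau0 G x else tau2 G x)"
  by (simp_all add: pdual_def)

lemma rgf_pdual:
  assumes "rgf G" "X \<subseteq> edges G"
  shows "rgf (pdual G X)"
  unfolding rgf_def pdual_fields
  using rgf_fin[OF assms(1)] rgfD[OF assms(1)] rgf_extra[OF assms(1)] UY_closed[OF assms] UY_compl[OF assms]
  by (auto split: if_splits)

lemma nonempty_pdual[simp]: "nonempty_rg (pdual G X) = nonempty_rg G"
  by (simp add: nonempty_rg_def pdual_fields)

lemma edge_of_pdual:
  assumes "rgf G" "X \<subseteq> edges G" "x \<in> fl G"
  shows "edge_of (pdual G X) x = edge_of G x"
  using UY_closed[OF assms(1,2)] UY_compl[OF assms(1,2)] rgfD[OF assms(1,3)] assms(3)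
  by (auto simp: edge_of_def pdual_fields)

lemma edges_pdual:
  assumes "rgf G" "X \<subseteq> edges G"
  shows "edges (pdual G X) = edges G"
  using edge_of_pdual[OF assms] by (auto simp: edges_def pdual_fields)

definition defs :: "('f \<Rightarrow> bool) \<Rightarrow> 'f rgraph \<Rightarrow> 'f set set" where
  "defs c G = {{x, tau1 G x} | x. x \<in> fl G \<and> c (tau1 G x) = c x}"

definition good :: "('f \<Rightarrow> bool) \<Rightarrow> 'f rgraph \<Rightarrow> bool" where
  "good c G \<longleftrightarrow> (\<forall>x\<in>fl G. c (tau0 G x) \<noteq> c x \<and> c (tau2 G x) \<noteq> c x) \<and> card (defs c G) \<le> 2"

lemma good_niso[simp]: "good c (G\<lparr>niso := n\<rparr>) = good c G"
  by (simp add: good_def defs_def)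

lemma good_pdual: "good c G \<Longrightarrow> good c (pdual G X)"
  by (simp add: good_def defs_def pdual_fields)

lemma good_del:
  assumes "rgf G" "Y \<subseteq> edges G" "good c G"
  shows "good c (del_edges G Y)"
proof -
  interpret skip "fl G" "tau1 G" "tau2 G" "fl G - \<Union>Y" by (rule skip_del[OF assms(1,2)])
  have cg: "\<And>y. y \<in> fl G \<Longrightarrow> c (tau2 G y) \<noteq> c y" using assms(3) by (simp add: good_def)
  have "card (defs c (del_edges G Y)) \<le> card (defs c G)"
    unfolding defs_def del_fields by (rule defect_mono[where c=c]) (rule cg)
  thus ?thesis using assms(3) by (auto simp: good_def del_fields)
qed

lemma step_good:
  assumes "minor_step G H" "good c G"
  shows "rg H \<and> (\<exists>c. good c H)"
  using assms
proof (induction rule: minor_step.induct)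
  case (del_edge G e)
  have rf: "rgf G" using del_edge rg_iff by blast
  have Y: "{e} \<subseteq> edges G" using del_edge by simp
  have "rg (del_edges G {e})" using rgf_del[OF rf Y] nonempty_del[OF del_edge(1) Y] rg_iff by blast
  moreover have "good c (del_edges G {e})" using good_del[OF rf Y del_edge(3)] .
  ultimately show ?case by blast
next
  case (del_vert G x)
  have rf: "rgf G" using del_vert rg_iff by blast
  let ?Y = "{e \<in> edges G. e \<inter> vertex_of G x \<noteq> {}}"
  have Y: "?Y \<subseteq> edges G" by blast
  have "rgf (del_vertex G x)" using rgf_del[OF rf Y] by (simp add: del_vertex_def Let_def)
  hence "rg (del_vertex G x)" using del_vert(3) rg_iff by blast
  moreover have "good c (del_vertex G x)" using good_del[OF rf Y del_vert(4)] by (simp add: del_vertex_def Let_def)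
  ultimately show ?case by blast
next
  case (del_isov G)
  have "rg (G\<lparr>niso := niso G - 1\<rparr>)" using del_isov rg_iff[of G] rg_iff[of "G\<lparr>niso := niso G - 1\<rparr>"] by simp
  then show ?case using del_isov by auto
next
  case (pdual G X)
  have rf: "rgf G" using pdual rg_iff by blast
  have "rg (pdual G X)" using rgf_pdual[OF rf pdual(2)] pdual(1) rg_iff[of G] rg_iff[of "pdual G X"] by simp
  then show ?case using good_pdual pdual by blast
qed



context skip
begin

lemma p_mult: "p n y = y \<Longrightarrow> p (n * k) y = y"
proof (induction k)
  case 0 then show ?case by simp
next
  case (Suc k)
  have "p (n * Suc k) y = p n (p (n * k) y)" by (simp add: pw_add[symmetric])
  then show ?case using Suc by simp
qed

lemma f_not_p: "y \<in> F \<Longrightarrow> f y \<noteq> p m y"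
proof (induction m arbitrary: y rule: less_induct)
  case (less m y)
  show ?case
  proof (cases m)
    case 0 then show ?thesis using fne less.prems by simp
  next
    case (Suc m1)
    show ?thesis
    proof (cases m1)
      case 0
      then show ?thesis using Suc gne[of "f y"] fF less.prems by auto
    next
      case (Suc m2)
      show ?thesis
      proof
        assume eq: "f y = p m y"
        have yF: "y \<in> F" using less.prems .
        have "f y = g (f (p (Suc m2) y))" using eq \<open>m = Suc m1\<close> Suc by simp
        hence "g (f y) = f (p (Suc m2) y)" using gg fF pF yF by metis
        hence "f (g (f y)) = p (Suc m2) y" using ff pF yF by metis
        moreover have "p (Suc m2) y = p m2 (p 1 y)" using pw_add[of f g m2 1 y] by simp
        moreover have "p 1 y = g (f y)" by simp
        ultimately have "f (p 1 y) = p m2 (p 1 y)" by simp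
        moreover have "m2 < m" using \<open>m = Suc m1\<close> Suc by simp
        moreover have "p 1 y \<in> F" using pF yF by blast
        ultimately show False using less.IH by blast
      qed
    qed
  qed
qed

lemma vcol:
  assumes x0: "x0 \<in> F" and orb: "F \<subseteq> orbs F {f, g} x0"
  shows "\<exists>c::'f \<Rightarrow> bool. \<forall>y\<in>F. c (f y) \<noteq> c y \<and> c (g y) \<noteq> c y"
proof -
  obtain n where n: "n > 0" "p n x0 = x0" using periodic[OF x0] by blast
  have gx: "\<exists>j. g (p i x0) = f (p j x0)" for i
  proof (cases i)
    case 0
    obtain n1 where n1: "n = Suc n1" using n by (cases n) auto
    have "g (f (p n1 x0)) = x0" using n n1 by simp
    hence "g x0 = f (p n1 x0)" using gg fF pF x0 by metis
    then show ?thesis using 0 by auto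
  next
    case (Suc i1)
    have "g (p i x0) = f (p i1 x0)" using Suc gg fF pF x0 by simp
    then show ?thesis by blast
  qed
  have nf: "f (p i x0) \<noteq> p j x0" for i j
  proof
    assume eq: "f (p i x0) = p j x0"
    define m where "m = j + n * i - i"
    have ini: "i \<le> n * i" using n by simp
    have "p m (p i x0) = p (m + i) x0" by (simp add: pw_add)
    also have "m + i = j + n * i" using ini unfolding m_def by linarith
    also have "p (j + n * i) x0 = p j (p (n * i) x0)" by (simp add: pw_add)
    also have "\<dots> = p j x0" using p_mult[OF n(2)] by simp
    finally have "f (p i x0) = p m (p i x0)" using eq by simp
    thus False using f_not_p pF x0 by blast
  qed
  define c where "c y = (\<exists>i. y = p i x0)" for y
  let ?U = "range (\<lambda>i. p i x0) \<union> range (\<lambda>i. f (p i x0))"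
  have "orbs F {f, g} x0 \<subseteq> ?U"
  proof (rule orbs_sub)
    have "x0 = p 0 x0" by simp
    thus "x0 \<in> ?U" by blast
  next
    fix a t assume a: "a \<in> ?U" "a \<in> F" "t \<in> {f, g}"
    show "t a \<in> ?U"
    proof (cases "\<exists>i. a = p i x0")
      case True
      then obtain i where i: "a = p i x0" by blast
      show ?thesis
      proof (cases "t = f")
        case True then show ?thesis using i by blast
      next
        case False
        hence "t = g" using a by auto
        then show ?thesis using gx[of i] i by auto
      qed
    next
      case False
      then obtain i where i: "a = f (p i x0)" using a by blast
      show ?thesis
      proof (cases "t = f")
        case True
        hence "t a = p i x0" using i ff pF x0 by simp
        then show ?thesis by blast
      next
        case False
        hence "t = g" using a by auto
        hence "t a = p (Suc i) x0" using i by simp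
        then show ?thesis by blast
      qed
    qed
  qed
  hence FU: "F \<subseteq> ?U" using orb by blast
  have "\<forall>y\<in>F. c (f y) \<noteq> c y \<and> c (g y) \<noteq> c y"
  proof
    fix y assume y: "y \<in> F"
    show "c (f y) \<noteq> c y \<and> c (g y) \<noteq> c y"
    proof (cases "\<exists>i. y = p i x0")
      case True
      then obtain i where i: "y = p i x0" by blast
      have "c y" using i unfolding c_def by blast
      moreover have "\<not> c (f y)"
      proof -
        have "\<forall>k. f (p i x0) \<noteq> p k x0" using nf by blast
        thus ?thesis using i unfolding c_def by simp
      qed
      moreover have "\<not> c (g y)"
      proof -
        obtain j where j: "g y = f (p j x0)" using gx i by blast
        have "\<forall>k. f (p j x0) \<noteq> p k x0" using nf by blast
        thus ?thesis using j unfolding c_def by simp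
      qed
      ultimately have "c y \<and> \<not> c (f y) \<and> \<not> c (g y)" by (intro conjI)
      thus ?thesis by (cases "c y"; cases "c (f y)"; cases "c (g y)") simp_all
    next
      case False
      have "y \<in> ?U" using FU y by (rule subsetD)
      then obtain i where i: "y = f (p i x0)" using False by blast
      have "\<forall>k. f (p i x0) \<noteq> p k x0" using nf by blast
      hence "\<not> c y" using i unfolding c_def by simp
      moreover have "c (f y)"
      proof -
        have "f y = p i x0" using i ff pF x0 by simp
        thus ?thesis unfolding c_def by blast
      qed
      moreover have "c (g y)"
      proof -
        have "g y = p (Suc i) x0" using i by simp
        thus ?thesis unfolding c_def by blast
      qed
      ultimately show ?thesis by blast
    qed
  qed
  thus ?thesis by blast
qed

lemma ret_col:
  fixes cv :: "'f \<Rightarrow> bool"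
  assumes cv: "\<And>y. y \<in> F \<Longrightarrow> cv (f y) \<noteq> cv y \<and> cv (g y) \<noteq> cv y" and y: "y \<in> A"
  shows "cv (ret f g A y) \<noteq> cv y"
proof -
  have yF: "y \<in> F" using y AF by auto
  have "cv (p j y) = cv y" for j
  proof (induction j)
    case 0 then show ?case by simp
  next
    case (Suc j)
    have A1: "cv (g (f (p j y))) \<noteq> cv (f (p j y))" using cv fF pF yF by blast
    have A2: "cv (f (p j y)) \<noteq> cv (p j y)" using cv pF yF by blast
    have "cv (g (f (p j y))) = cv (p j y)" by (rule bool3[OF A1 A2])
    then show ?case using Suc by simp
  qed
  moreover have "cv (f (p (kk f g A y) y)) \<noteq> cv (p (kk f g A y) y)" using cv pF yF by blast
  ultimately show ?thesis by (simp add: ret_kk)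
qed

end

lemma vcol_global:
  assumes "finite F" "invol F f" "invol F g" "x0 \<in> F" "F \<subseteq> orbs F {f, g} x0"
  shows "\<exists>c::'f \<Rightarrow> bool. \<forall>y\<in>F. c (f y) \<noteq> c y \<and> c (g y) \<noteq> c y"
proof -
  interpret skip F f g F using assms by unfold_locales (auto simp: invol_def)
  show ?thesis using vcol assms by blast
qed


lemma compl_edges:
  assumes "rgf B" "x \<in> fl B"
  shows "fl B - \<Union>(edges B - {edge_of B x}) = edge_of B x"
proof
  show "fl B - \<Union>(edges B - {edge_of B x}) \<subseteq> edge_of B x"
  proof
    fix y assume y: "y \<in> fl B - \<Union>(edges B - {edge_of B x})"
    have E: "edge_of B y \<in> edges B" using y edge_in_edges[of y B] by simp
    have yy: "y \<in> edge_of B y" by (rule edge_self)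
    have "edge_of B y = edge_of B x"
    proof (rule ccontr)
      assume "edge_of B y \<noteq> edge_of B x"
      hence "edge_of B y \<in> edges B - {edge_of B x}" using E by simp
      hence "y \<in> \<Union>(edges B - {edge_of B x})" using yy by (rule UnionI)
      thus False using y by simp
    qed
    thus "y \<in> edge_of B x" using yy by simp
  qed
next
  show "edge_of B x \<subseteq> fl B - \<Union>(edges B - {edge_of B x})"
  proof
    fix y assume y: "y \<in> edge_of B x"
    have "y \<in> fl B" using edge_sub[OF assms] y by blast
    moreover have "y \<notin> \<Union>(edges B - {edge_of B x})"
    proof
      assume "y \<in> \<Union>(edges B - {edge_of B x})"
      then obtain e' where "e' \<in> edges B" "e' \<noteq> edge_of B x" "y \<in> e'" by blast
      thus False using edges_disj[OF assms(1) _ edge_in_edges[OF assms(2)]] y by blast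
    qed
    ultimately show "y \<in> fl B - \<Union>(edges B - {edge_of B x})" by blast
  qed
qed

lemma skip_edge:
  assumes "rgf B" "x \<in> fl B"
  shows "skip (fl B) (tau1 B) (tau2 B) (edge_of B x)"
proof -
  have "skip (fl B) (tau1 B) (tau2 B) (fl B - \<Union>(edges B - {edge_of B x}))"
    by (rule skip_del) (use assms in auto)
  thus ?thesis using compl_edges[OF assms] by simp
qed

lemma loop_sub_fields:
  assumes "rgf B" "x \<in> fl B"
  shows "fl (loop_sub B x) = edge_of B x" "tau0 (loop_sub B x) = tau0 B"
    "tau2 (loop_sub B x) = tau2 B" "tau1 (loop_sub B x) = ret (tau1 B) (tau2 B) (edge_of B x)"
  unfolding loop_sub_def del_fields compl_edges[OF assms] by simp_all

lemma vertex_orbs: "vertex_of G x = orbs (fl G) {tau1 G, tau2 G} x"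
  by (simp add: vertex_of_def orb_eq)

lemma loop_orient:
  fixes cv :: "'f \<Rightarrow> bool"
  assumes rf: "rgf B" and x: "x \<in> fl B" and x0: "x0 \<in> fl B" and V: "fl B \<subseteq> vertex_of B x0"
    and cv: "\<And>y. y \<in> fl B \<Longrightarrow> cv (tau1 B y) \<noteq> cv y \<and> cv (tau2 B y) \<noteq> cv y"
  shows "orientable (loop_sub B x) \<longleftrightarrow> cv (tau0 B x) \<noteq> cv x"
proof -
  interpret skip "fl B" "tau1 B" "tau2 B" "edge_of B x" by (rule skip_edge[OF rf x])
  let ?r = "ret (tau1 B) (tau2 B) (edge_of B x)"
  note r = rgfD[OF rf x] and ex = rgf_extra[OF rf x]
  have t0F: "tau0 B x \<in> fl B" using r by simp
  note r0 = rgfD[OF rf t0F]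
  show ?thesis
  proof
    assume "orientable (loop_sub B x)"
    then obtain d :: "'f \<Rightarrow> bool" where d: "\<forall>y\<in>edge_of B x. d (tau0 B y) \<noteq> d y \<and> d (?r y) \<noteq> d y \<and> d (tau2 B y) \<noteq> d y"
      unfolding orientable_def loop_sub_fields[OF rf x] by blast
    have inv2: "\<And>t. t \<in> {tau1 B, tau2 B} \<Longrightarrow> invol (fl B) t" using rgf_invol[OF rf] by auto
    have xo: "x \<in> orbs (fl B) {tau1 B, tau2 B} x0" using V x unfolding vertex_orbs by blast
    have oeq: "orbs (fl B) {tau1 B, tau2 B} x = orbs (fl B) {tau1 B, tau2 B} x0"
      by (rule orbs_eq[OF inv2 x0 xo])
    have t0V: "tau0 B x \<in> orbs (fl B) {tau1 B, tau2 B} x" using V t0F oeq unfolding vertex_orbs by blast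
    have t0e: "tau0 B x \<in> edge_of B x" by (rule edge_t0[OF rf x edge_self])
    have t0o: "tau0 B x \<in> orbs (edge_of B x) {tau2 B, ?r} x"
      using orbs_inter[OF edge_self[of x B]] t0V t0e by blast
    have sub: "orbs (edge_of B x) {tau2 B, ?r} x \<subseteq> {z. z \<in> edge_of B x \<longrightarrow> (cv z = d z) = (cv x = d x)}"
    proof (rule orbs_sub)
      show "x \<in> {z. z \<in> edge_of B x \<longrightarrow> (cv z = d z) = (cv x = d x)}" by simp
    next
      fix a t assume a: "a \<in> {z. z \<in> edge_of B x \<longrightarrow> (cv z = d z) = (cv x = d x)}" "a \<in> edge_of B x" "t \<in> {tau2 B, ?r}"
      have aF: "a \<in> fl B" using a(2) AF by blast
      have rc: "cv (?r a) \<noteq> cv a" by (rule ret_col[of cv a]) (use cv a(2) in auto)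
      have "cv (t a) \<noteq> cv a" using a(3) cv[OF aF] rc by auto
      moreover have "d (t a) \<noteq> d a" using a(3) d a(2) by auto
      moreover have "(cv a = d a) = (cv x = d x)" using a by simp
      ultimately show "t a \<in> {z. z \<in> edge_of B x \<longrightarrow> (cv z = d z) = (cv x = d x)}" by auto
    qed
    have "tau0 B x \<in> {z. z \<in> edge_of B x \<longrightarrow> (cv z = d z) = (cv x = d x)}" using sub t0o by (rule subsetD)
    hence E: "(cv (tau0 B x) = d (tau0 B x)) = (cv x = d x)" using t0e by simp
    have D: "d (tau0 B x) \<noteq> d x" using d edge_self[of x B] by simp
    show "cv (tau0 B x) \<noteq> cv x" using E D by (cases "cv x"; cases "d x"; cases "cv (tau0 B x)"; cases "d (tau0 B x)") simp_all
  next
    assume h: "cv (tau0 B x) \<noteq> cv x"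
    have t2F: "tau2 B x \<in> fl B" using r by simp
    have c1: "cv (tau2 B x) \<noteq> cv x" using cv x by blast
    have c2: "cv (tau2 B (tau0 B x)) \<noteq> cv (tau0 B x)" using cv t0F by blast
    have "\<forall>y\<in>edge_of B x. cv (tau0 B y) \<noteq> cv y \<and> cv (?r y) \<noteq> cv y \<and> cv (tau2 B y) \<noteq> cv y"
    proof
      fix y assume y: "y \<in> edge_of B x"
      have yF: "y \<in> fl B" using y AF by blast
      have "cv (?r y) \<noteq> cv y" by (rule ret_col[of cv y]) (use cv y in auto)
      moreover have "cv (tau2 B y) \<noteq> cv y" using cv yF by blast
      moreover have "cv (tau0 B y) \<noteq> cv y"
      proof -
        have "y = x \<or> y = tau0 B x \<or> y = tau2 B x \<or> y = tau0 B (tau2 B x)" using y by (simp add: edge_of_def)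
        thus ?thesis
        proof (elim disjE)
          assume "y = x" thus ?thesis using h by simp
        next
          assume "y = tau0 B x" thus ?thesis using h r by simp
        next
          assume "y = tau2 B x"
          thus ?thesis using h c1 c2 r by (cases "cv x"; cases "cv (tau0 B x)"; cases "cv (tau2 B x)") auto
        next
          assume "y = tau0 B (tau2 B x)"
          thus ?thesis using h c1 c2 r ex by (cases "cv x"; cases "cv (tau0 B x)"; cases "cv (tau2 B x)") auto
        qed
      qed
      ultimately show "cv (tau0 B y) \<noteq> cv y \<and> cv (?r y) \<noteq> cv y \<and> cv (tau2 B y) \<noteq> cv y" by blast
    qed
    thus "orientable (loop_sub B x)"
      unfolding orientable_def loop_sub_fields[OF rf x] by blast
  qed
qed



lemma bouquet_vertex:
  assumes rf: "rgf B" and n0: "niso B = 0" and bq: "bouquet B" and ne: "fl B \<noteq> {}"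
  shows "\<exists>x0\<in>fl B. fl B \<subseteq> vertex_of B x0"
proof -
  obtain x0 where x0: "x0 \<in> fl B" using ne by blast
  have "card {vertex_of B x | x. x \<in> fl B} = 1" using bq n0 by (simp add: bouquet_def nverts_def)
  then obtain V where V: "{vertex_of B x | x. x \<in> fl B} = {V}" by (rule card_1_singletonE)
  have VV: "vertex_of B y = V" if "y \<in> fl B" for y using V that by blast
  have "fl B \<subseteq> vertex_of B x0"
  proof
    fix y assume y: "y \<in> fl B"
    have "y \<in> vertex_of B y" unfolding vertex_orbs by (rule orbs_self)
    thus "y \<in> vertex_of B x0" using VV[OF y] VV[OF x0] by simp
  qed
  thus ?thesis using x0 by blast
qed

lemma setb_cong:
  "(\<And>x. x \<in> S \<Longrightarrow> P x = Q x) \<Longrightarrow> {h x | x. x \<in> S \<and> P x} = {h x | x. x \<in> S \<and> Q x}"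
  by blast

lemma vcol_B:
  fixes B :: "'f rgraph"
  assumes rf: "rgf B" and x0: "x0 \<in> fl B" and V: "fl B \<subseteq> vertex_of B x0"
  shows "\<exists>cv::'f \<Rightarrow> bool. \<forall>y\<in>fl B. cv (tau1 B y) \<noteq> cv y \<and> cv (tau2 B y) \<noteq> cv y"
  by (rule vcol_global[OF rgf_fin[OF rf] rgf_invol(2)[OF rf] rgf_invol(3)[OF rf] x0])
     (use V in \<open>simp add: vertex_orbs\<close>)

lemma pob_good:
  fixes B :: "'f rgraph"
  assumes rf: "rgf B" and n0: "niso B = 0" and ne: "fl B \<noteq> {}" and pob: "po_bouquet B"
  shows "\<exists>c. good c B"
proof -
  obtain x0 where x0: "x0 \<in> fl B" "fl B \<subseteq> vertex_of B x0"
    using bouquet_vertex[OF rf n0 _ ne] pob by (auto simp: po_bouquet_def)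
  obtain cv :: "'f \<Rightarrow> bool" where cv: "\<forall>y\<in>fl B. cv (tau1 B y) \<noteq> cv y \<and> cv (tau2 B y) \<noteq> cv y"
    using vcol_B[OF rf x0] by blast
  obtain s :: "'f \<Rightarrow> bool" where
    s1: "\<forall>x\<in>fl B. s (tau2 B x) = s x" and
    s2: "card {{x, tau1 B x} | x. x \<in> fl B \<and> s x \<noteq> s (tau1 B x)} \<le> 2" and
    s3: "\<forall>x\<in>fl B. (orientable (loop_sub B x) \<longrightarrow> s (tau0 B x) = s x) \<and>
                   (\<not> orientable (loop_sub B x) \<longrightarrow> s (tau0 B x) \<noteq> s x)"
    using pob unfolding po_bouquet_def by blast
  define c where "c y = (cv y \<noteq> s y)" for y
  have t0: "c (tau0 B y) \<noteq> c y" if y: "y \<in> fl B" for y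
  proof -
    have lo: "orientable (loop_sub B y) \<longleftrightarrow> cv (tau0 B y) \<noteq> cv y"
      by (rule loop_orient[OF rf y x0]) (use cv in blast)
    show ?thesis
    proof (cases "orientable (loop_sub B y)")
      case True
      hence "s (tau0 B y) = s y" "cv (tau0 B y) \<noteq> cv y" using s3 y lo by auto
      thus ?thesis unfolding c_def by (cases "cv y"; cases "s y"; cases "cv (tau0 B y)") simp_all
    next
      case False
      hence "s (tau0 B y) \<noteq> s y" "cv (tau0 B y) = cv y" using s3 y lo by auto
      thus ?thesis unfolding c_def by (cases "cv y"; cases "s y"; cases "s (tau0 B y)") simp_all
    qed
  qed
  have t2: "c (tau2 B y) \<noteq> c y" if y: "y \<in> fl B" for y
  proof -
    have "s (tau2 B y) = s y" "cv (tau2 B y) \<noteq> cv y" using s1 cv y by auto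
    thus ?thesis unfolding c_def by (cases "cv y"; cases "s y"; cases "cv (tau2 B y)") simp_all
  qed
  have "defs c B = {{x, tau1 B x} | x. x \<in> fl B \<and> s x \<noteq> s (tau1 B x)}"
    unfolding defs_def
  proof (rule setb_cong)
    fix x assume x: "x \<in> fl B"
    have "cv (tau1 B x) \<noteq> cv x" using cv x by blast
    thus "(c (tau1 B x) = c x) = (s x \<noteq> s (tau1 B x))"
      unfolding c_def by (cases "cv x"; cases "s x"; cases "cv (tau1 B x)"; cases "s (tau1 B x)") simp_all
  qed
  hence "card (defs c B) \<le> 2" using s2 by simp
  thus ?thesis using t0 t2 unfolding good_def by blast
qed

lemma good_pob:
  fixes B :: "'f rgraph"
  assumes rf: "rgf B" and bq: "bouquet B" and x0: "x0 \<in> fl B" "fl B \<subseteq> vertex_of B x0"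
    and gd: "good c B"
  shows "po_bouquet B"
proof -
  obtain cv :: "'f \<Rightarrow> bool" where cv: "\<forall>y\<in>fl B. cv (tau1 B y) \<noteq> cv y \<and> cv (tau2 B y) \<noteq> cv y"
    using vcol_B[OF rf x0] by blast
  define s where "s y = (cv y \<noteq> c y)" for y
  have c02: "c (tau0 B y) \<noteq> c y" "c (tau2 B y) \<noteq> c y" if "y \<in> fl B" for y
    using gd that unfolding good_def by auto
  have s1: "\<forall>x\<in>fl B. s (tau2 B x) = s x"
  proof
    fix y assume y: "y \<in> fl B"
    have "c (tau2 B y) \<noteq> c y" "cv (tau2 B y) \<noteq> cv y" using c02 cv y by auto
    thus "s (tau2 B y) = s y" unfolding s_def by (cases "cv y"; cases "c y"; cases "cv (tau2 B y)") simp_all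
  qed
  have "{{x, tau1 B x} | x. x \<in> fl B \<and> s x \<noteq> s (tau1 B x)} = defs c B"
    unfolding defs_def
  proof (rule setb_cong)
    fix x assume x: "x \<in> fl B"
    have "cv (tau1 B x) \<noteq> cv x" using cv x by blast
    thus "(s x \<noteq> s (tau1 B x)) = (c (tau1 B x) = c x)"
      unfolding s_def by (cases "cv x"; cases "c x"; cases "cv (tau1 B x)"; cases "c (tau1 B x)") simp_all
  qed
  hence s2: "card {{x, tau1 B x} | x. x \<in> fl B \<and> s x \<noteq> s (tau1 B x)} \<le> 2" using gd by (simp add: good_def)
  have s3: "\<forall>x\<in>fl B. (orientable (loop_sub B x) \<longrightarrow> s (tau0 B x) = s x) \<and>
                   (\<not> orientable (loop_sub B x) \<longrightarrow> s (tau0 B x) \<noteq> s x)"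
  proof
    fix y assume y: "y \<in> fl B"
    have lo: "orientable (loop_sub B y) \<longleftrightarrow> cv (tau0 B y) \<noteq> cv y"
      by (rule loop_orient[OF rf y x0]) (use cv in blast)
    have cy: "c (tau0 B y) \<noteq> c y" using c02 y by auto
    show "(orientable (loop_sub B y) \<longrightarrow> s (tau0 B y) = s y) \<and>
                   (\<not> orientable (loop_sub B y) \<longrightarrow> s (tau0 B y) \<noteq> s y)"
      unfolding lo s_def using cy by (cases "cv y"; cases "c y"; cases "cv (tau0 B y)"; cases "c (tau0 B y)") simp_all
  qed
  show ?thesis unfolding po_bouquet_def using bq s1 s2 s3 by blast
qed

definition cmp :: "'f rgraph \<Rightarrow> 'f \<Rightarrow> 'f set" where
  "cmp G x = orbs (fl G) {tau0 G, tau1 G, tau2 G} x"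

lemma fcomps_eq: "fcomps G = {cmp G x | x. x \<in> fl G}"
  by (simp add: fcomps_def cmp_def orb_eq)

lemma inv3: "rgf G \<Longrightarrow> t \<in> {tau0 G, tau1 G, tau2 G} \<Longrightarrow> invol (fl G) t"
  using rgf_invol by blast

lemma comp_self: "x \<in> cmp G x" unfolding cmp_def by (rule orbs_self)

lemma comp_sub: "rgf G \<Longrightarrow> x \<in> fl G \<Longrightarrow> cmp G x \<subseteq> fl G"
  unfolding cmp_def by (rule orbs_mem_F) (auto intro: inv3)

lemma comp_step:
  assumes "rgf G" "x \<in> fl G" "y \<in> cmp G x"
  shows "tau0 G y \<in> cmp G x" "tau1 G y \<in> cmp G x" "tau2 G y \<in> cmp G x"
proof -
  have yF: "y \<in> fl G" using comp_sub[OF assms(1,2)] assms(3) by blast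
  have yo: "y \<in> orbs (fl G) {tau0 G, tau1 G, tau2 G} x" using assms(3) unfolding cmp_def .
  show "tau0 G y \<in> cmp G x" unfolding cmp_def by (rule orbs_step[OF yo yF]) simp
  show "tau1 G y \<in> cmp G x" unfolding cmp_def by (rule orbs_step[OF yo yF]) simp
  show "tau2 G y \<in> cmp G x" unfolding cmp_def by (rule orbs_step[OF yo yF]) simp
qed

lemma comp_eq:
  assumes "rgf G" "x \<in> fl G" "y \<in> cmp G x"
  shows "cmp G y = cmp G x"
  unfolding cmp_def by (rule orbs_eq) (use inv3[OF assms(1)] assms(2,3) in \<open>auto simp: cmp_def\<close>)

lemma restr_fields:
  "fl (restr G C) = C" "tau0 (restr G C) = tau0 G" "tau1 (restr G C) = tau1 G"
  "tau2 (restr G C) = tau2 G" "niso (restr G C) = 0"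
  by (simp_all add: restr_def)

lemma rgf_restr:
  assumes "rgf G" "C \<subseteq> fl G" "\<forall>y\<in>C. tau0 G y \<in> C \<and> tau1 G y \<in> C \<and> tau2 G y \<in> C"
  shows "rgf (restr G C)"
  unfolding rgf_def restr_fields
  using assms(3) rgfD[OF assms(1) subsetD[OF assms(2)]] finite_subset[OF assms(2) rgf_fin[OF assms(1)]]
  by simp

lemma good_pdual_back:
  assumes "good c (pdual K X)"
  shows "good c K"
proof -
  have a: "\<forall>x\<in>fl K. c (tau0 (pdual K X) x) \<noteq> c x \<and> c (tau2 (pdual K X) x) \<noteq> c x"
    using assms unfolding good_def by (simp add: pdual_fields)
  have "\<forall>x\<in>fl K. c (tau0 K x) \<noteq> c x \<and> c (tau2 K x) \<noteq> c x"
  proof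
    fix x assume x: "x \<in> fl K"
    have a1: "c (tau0 (pdual K X) x) \<noteq> c x" "c (tau2 (pdual K X) x) \<noteq> c x" using a x by auto
    show "c (tau0 K x) \<noteq> c x \<and> c (tau2 K x) \<noteq> c x"
      using a1 by (cases "x \<in> \<Union>X") (simp_all add: pdual_fields)
  qed
  moreover have "defs c K = defs c (pdual K X)" by (simp add: defs_def pdual_fields)
  ultimately show ?thesis using assms unfolding good_def by simp
qed

lemma combine:
  fixes cS :: "'f \<Rightarrow> bool" and G :: "'f rgraph"
  assumes rf: "rgf G" and S: "S \<subseteq> fl G"
    and Scl: "\<forall>y\<in>S. tau0 G y \<in> S \<and> tau1 G y \<in> S \<and> tau2 G y \<in> S"
    and cS: "\<forall>y\<in>S. cS (tau0 G y) \<noteq> cS y \<and> cS (tau2 G y) \<noteq> cS y"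
    and dS: "card {{y, tau1 G y} | y. y \<in> S \<and> cS (tau1 G y) = cS y} \<le> 2"
    and oth: "\<forall>D\<in>fcomps G. D \<inter> S = {} \<longrightarrow> orientable (restr G D)"
  shows "\<exists>c. good c G"
proof -
  define oc where "oc D = (SOME c::'f\<Rightarrow>bool. \<forall>x\<in>D. c (tau0 G x) \<noteq> c x \<and> c (tau1 G x) \<noteq> c x \<and> c (tau2 G x) \<noteq> c x)" for D
  have ocD: "\<forall>x\<in>D. oc D (tau0 G x) \<noteq> oc D x \<and> oc D (tau1 G x) \<noteq> oc D x \<and> oc D (tau2 G x) \<noteq> oc D x"
    if "D \<in> fcomps G" "D \<inter> S = {}" for D
  proof -
    have "orientable (restr G D)" using oth that by blast
    hence "\<exists>c::'f\<Rightarrow>bool. \<forall>x\<in>D. c (tau0 G x) \<noteq> c x \<and> c (tau1 G x) \<noteq> c x \<and> c (tau2 G x) \<noteq> c x"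
      unfolding orientable_def restr_fields .
    thus ?thesis unfolding oc_def by (rule someI_ex)
  qed
  have inv: "\<And>t. t \<in> {tau0 G, tau1 G, tau2 G} \<Longrightarrow> invol (fl G) t" using inv3[OF rf] by blast
  have notS: "cmp G y \<inter> S = {}" if y: "y \<in> fl G" "y \<notin> S" for y
  proof (rule ccontr)
    assume "cmp G y \<inter> S \<noteq> {}"
    then obtain z where z: "z \<in> cmp G y" "z \<in> S" by blast
    have "cmp G z \<subseteq> S" unfolding cmp_def by (rule orbs_sub) (use z Scl in auto)
    moreover have "y \<in> cmp G z" using orbs_sym[OF inv y(1)] z unfolding cmp_def by blast
    ultimately show False using y by blast
  qed
  have tnotS: "tau0 G y \<notin> S \<and> tau1 G y \<notin> S \<and> tau2 G y \<notin> S" if y: "y \<in> fl G" "y \<notin> S" for y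
    using Scl rgfD[OF rf y(1)] y(2) by metis
  have tcomp: "cmp G (tau0 G y) = cmp G y \<and> cmp G (tau1 G y) = cmp G y \<and> cmp G (tau2 G y) = cmp G y"
    if y: "y \<in> fl G" for y
    using comp_eq[OF rf y] comp_step[OF rf y comp_self] by simp
  have compF: "cmp G y \<in> fcomps G" if "y \<in> fl G" for y using that fcomps_eq by blast
  define c where "c y = (if y \<in> S then cS y else oc (cmp G y) y)" for y
  have cnS: "c (t y) \<noteq> c y" if y: "y \<in> fl G" "y \<notin> S" and t: "t \<in> {tau0 G, tau1 G, tau2 G}" for y t
  proof -
    have o: "\<forall>x\<in>cmp G y. oc (cmp G y) (tau0 G x) \<noteq> oc (cmp G y) x \<and> oc (cmp G y) (tau1 G x) \<noteq> oc (cmp G y) x \<and> oc (cmp G y) (tau2 G x) \<noteq> oc (cmp G y) x"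
      using ocD[OF compF[OF y(1)] notS[OF y]] .
    have yc: "y \<in> cmp G y" by (rule comp_self)
    show ?thesis using t tnotS[OF y] tcomp[OF y(1)] o yc y(2) unfolding c_def by auto
  qed
  have g1: "\<forall>y\<in>fl G. c (tau0 G y) \<noteq> c y \<and> c (tau2 G y) \<noteq> c y"
  proof
    fix y assume y: "y \<in> fl G"
    show "c (tau0 G y) \<noteq> c y \<and> c (tau2 G y) \<noteq> c y"
    proof (cases "y \<in> S")
      case True then show ?thesis using Scl cS unfolding c_def by auto
    next
      case False then show ?thesis using cnS[OF y False] by blast
    qed
  qed
  have sub: "defs c G \<subseteq> {{y, tau1 G y} | y. y \<in> S \<and> cS (tau1 G y) = cS y}"
  proof
    fix P assume "P \<in> defs c G"
    then obtain y where y: "P = {y, tau1 G y}" "y \<in> fl G" "c (tau1 G y) = c y" unfolding defs_def by blast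
    have yS: "y \<in> S" using cnS[OF y(2)] y(3) by blast
    hence "cS (tau1 G y) = cS y" using y(3) Scl unfolding c_def by auto
    thus "P \<in> {{y, tau1 G y} | y. y \<in> S \<and> cS (tau1 G y) = cS y}" using y yS by blast
  qed
  have fin: "finite {{y, tau1 G y} | y. y \<in> S \<and> cS (tau1 G y) = cS y}"
  proof -
    have "{{y, tau1 G y} | y. y \<in> S \<and> cS (tau1 G y) = cS y} \<subseteq> (\<lambda>y. {y, tau1 G y}) ` S" by blast
    moreover have "finite S" using S rgf_fin[OF rf] finite_subset by blast
    ultimately show ?thesis using finite_subset by blast
  qed
  have "card (defs c G) \<le> 2" using card_mono[OF fin sub] dS by simp
  thus ?thesis using g1 unfolding good_def by blast
qed

lemma thmA:
  fixes G :: "'f rgraph"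
  assumes rg: "rg G" and po: "pseudo_orientable G"
  shows "\<exists>c. good c G"
proof -
  have rf: "rgf G" using rg rg_iff by blast
  show ?thesis
  proof (cases "\<exists>C\<in>fcomps G. po_conn (restr G C) \<and> (\<forall>D\<in>fcomps G. D \<noteq> C \<longrightarrow> orientable (restr G D))")
    case True
    then obtain C where C: "C \<in> fcomps G" "po_conn (restr G C)" "\<forall>D\<in>fcomps G. D \<noteq> C \<longrightarrow> orientable (restr G D)" by blast
    obtain x where x: "x \<in> fl G" "C = cmp G x" using C(1) unfolding fcomps_eq by blast
    have CF: "C \<subseteq> fl G" using comp_sub[OF rf x(1)] x by simp
    have Ccl: "\<forall>y\<in>C. tau0 G y \<in> C \<and> tau1 G y \<in> C \<and> tau2 G y \<in> C" using comp_step[OF rf x(1)] x by simp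
    let ?K = "restr G C"
    have rK: "rgf ?K" by (rule rgf_restr[OF rf CF Ccl])
    obtain X where X: "qtree_conn ?K X" "po_bouquet (pdual ?K X)" using C(2) unfolding po_conn_def by blast
    have XE: "X \<subseteq> edges ?K" using X(1) unfolding qtree_conn_def by blast
    have rB: "rgf (pdual ?K X)" by (rule rgf_pdual[OF rK XE])
    have ne: "fl (pdual ?K X) \<noteq> {}" using comp_self[of x G] x by (auto simp: pdual_fields restr_fields)
    obtain cB where cB: "good cB (pdual ?K X)"
      using pob_good[OF rB _ ne X(2)] by (auto simp: pdual_fields restr_fields)
    have gK: "good cB ?K" by (rule good_pdual_back[OF cB])
    have cS: "\<forall>y\<in>C. cB (tau0 G y) \<noteq> cB y \<and> cB (tau2 G y) \<noteq> cB y"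
      using gK unfolding good_def restr_fields by blast
    have dS: "card {{y, tau1 G y} | y. y \<in> C \<and> cB (tau1 G y) = cB y} \<le> 2"
      using gK unfolding good_def defs_def restr_fields by blast
    have oth: "\<forall>D\<in>fcomps G. D \<inter> C = {} \<longrightarrow> orientable (restr G D)"
    proof (intro ballI impI)
      fix D assume D: "D \<in> fcomps G" "D \<inter> C = {}"
      have "x \<in> C" using x comp_self by simp
      hence "D \<noteq> C" using D(2) by blast
      thus "orientable (restr G D)" using C(3) D(1) by blast
    qed
    show ?thesis by (rule combine[OF rf CF Ccl cS dS oth])
  next
    case False
    hence oth: "\<forall>D\<in>fcomps G. orientable (restr G D)" using po unfolding pseudo_orientable_def by blast
    show ?thesis
      by (rule combine[OF rf, of "{}" "\<lambda>_. True"]) (use oth in auto)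
  qed
qed



lemma ret_cong:
  assumes a: "a \<in> A" and ex: "\<exists>k. f (pw f g k a) \<in> A" and gg: "\<And>z. z \<notin> A \<Longrightarrow> g z = g' z"
  shows "kk f g' A a = kk f g A a" "ret f g' A a = ret f g A a"
proof -
  let ?k = "kk f g A a"
  have ink: "f (pw f g ?k a) \<in> A" unfolding kk_pw by (rule LeastI_ex[OF ex])
  have mn: "f (pw f g j a) \<notin> A" if "j < ?k" for j using that unfolding kk_pw by (rule not_less_Least)
  have weq: "j \<le> ?k \<Longrightarrow> pw f g' j a = pw f g j a" for j
  proof (induction j)
    case 0 show ?case by simp
  next
    case (Suc j)
    have n: "f (pw f g j a) \<notin> A" using mn Suc.prems by simp
    have "pw f g' j a = pw f g j a" using Suc by simp
    then show ?case using gg[OF n] by simp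
  qed
  show k: "kk f g' A a = ?k"
    unfolding kk_pw[of f g' A a]
  proof (rule Least_equality)
    show "f (pw f g' ?k a) \<in> A" using weq[of ?k] ink by simp
  next
    fix j assume j: "f (pw f g' j a) \<in> A"
    show "?k \<le> j"
    proof (rule ccontr)
      assume "\<not> ?k \<le> j" hence "j < ?k" by simp
      thus False using mn[of j] weq[of j] j by simp
    qed
  qed
  show "ret f g' A a = ret f g A a" unfolding ret_kk k using weq[of ?k] by simp
qed

lemma orbs_off:
  assumes gg: "\<And>z. z \<notin> A \<Longrightarrow> g z = g' z" and sub: "orbs F {f, g} x \<subseteq> F - A"
  shows "orbs F {f, g'} x = orbs F {f, g} x"
proof -
  have s1: "orbs F {f, g'} x \<subseteq> orbs F {f, g} x"
  proof (rule orbs_sub)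
    show "x \<in> orbs F {f, g} x" by (rule orbs_self)
  next
    fix a t assume a: "a \<in> orbs F {f, g} x" "a \<in> F" "t \<in> {f, g'}"
    have aA: "a \<notin> A" using a(1) sub by blast
    show "t a \<in> orbs F {f, g} x"
    proof (cases "t = f")
      case True thus ?thesis using orbs_step[OF a(1,2), of f] by simp
    next
      case False hence "t = g'" using a(3) by simp
      thus ?thesis using orbs_step[OF a(1,2), of g] gg[OF aA] by simp
    qed
  qed
  have s2: "orbs F {f, g} x \<subseteq> orbs F {f, g'} x"
  proof (rule orbs_sub)
    show "x \<in> orbs F {f, g'} x" by (rule orbs_self)
  next
    fix a t assume a: "a \<in> orbs F {f, g'} x" "a \<in> F" "t \<in> {f, g}"
    have aA: "a \<notin> A" using a(1) s1 sub by blast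
    show "t a \<in> orbs F {f, g'} x"
    proof (cases "t = f")
      case True thus ?thesis using orbs_step[OF a(1,2), of f] by simp
    next
      case False hence "t = g" using a(3) by simp
      thus ?thesis using orbs_step[OF a(1,2), of g'] gg[OF aA] by simp
    qed
  qed
  show ?thesis using s1 s2 by (rule subset_antisym)
qed

lemma orbs_off_set:
  assumes gg: "\<And>z. z \<notin> A \<Longrightarrow> g z = g' z"
  shows "{orbs F {f, g'} x | x. x \<in> F \<and> orbs F {f, g'} x \<subseteq> F - A} =
         {orbs F {f, g} x | x. x \<in> F \<and> orbs F {f, g} x \<subseteq> F - A}"
proof -
  have gg': "\<And>z. z \<notin> A \<Longrightarrow> g' z = g z" using gg by metis
  have e: "orbs F {f, g'} x = orbs F {f, g} x" if "orbs F {f, g} x \<subseteq> F - A" for x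
    using orbs_off[OF gg that] .
  have e': "orbs F {f, g} x = orbs F {f, g'} x" if "orbs F {f, g'} x \<subseteq> F - A" for x
    using orbs_off[OF gg' that] .
  show ?thesis
  proof (rule set_eqI, rule iffI)
    fix Q assume "Q \<in> {orbs F {f, g'} x | x. x \<in> F \<and> orbs F {f, g'} x \<subseteq> F - A}"
    then obtain x where x: "Q = orbs F {f, g'} x" "x \<in> F" "orbs F {f, g'} x \<subseteq> F - A" by blast
    have "Q = orbs F {f, g} x" "orbs F {f, g} x \<subseteq> F - A" using e'[OF x(3)] x by auto
    thus "Q \<in> {orbs F {f, g} x | x. x \<in> F \<and> orbs F {f, g} x \<subseteq> F - A}" using x(2) by blast
  next
    fix Q assume "Q \<in> {orbs F {f, g} x | x. x \<in> F \<and> orbs F {f, g} x \<subseteq> F - A}"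
    then obtain x where x: "Q = orbs F {f, g} x" "x \<in> F" "orbs F {f, g} x \<subseteq> F - A" by blast
    have "Q = orbs F {f, g'} x" "orbs F {f, g'} x \<subseteq> F - A" using e[OF x(3)] x by auto
    thus "Q \<in> {orbs F {f, g'} x | x. x \<in> F \<and> orbs F {f, g'} x \<subseteq> F - A}" using x(2) by blast
  qed
qed

lemma UY_compl_eq:
  assumes rf: "rgf K" and X: "X \<subseteq> edges K"
  shows "\<Union>(edges K - X) = fl K - \<Union>X"
proof
  show "\<Union>(edges K - X) \<subseteq> fl K - \<Union>X"
  proof
    fix z assume "z \<in> \<Union>(edges K - X)"
    then obtain e where e: "e \<in> edges K" "e \<notin> X" "z \<in> e" by blast
    have "z \<in> fl K" using edges_sub[OF rf e(1)] e(3) by blast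
    moreover have "z \<notin> \<Union>X"
    proof
      assume "z \<in> \<Union>X"
      then obtain e' where e': "e' \<in> X" "z \<in> e'" by blast
      have "e' \<in> edges K" using e'(1) X by blast
      hence "e' = e" by (rule edges_disj[OF rf _ e(1) e'(2) e(3)])
      thus False using \<open>e' \<in> X\<close> e(2) by simp
    qed
    ultimately show "z \<in> fl K - \<Union>X" by blast
  qed
next
  show "fl K - \<Union>X \<subseteq> \<Union>(edges K - X)"
  proof
    fix z assume z: "z \<in> fl K - \<Union>X"
    have zF: "z \<in> fl K" using z by simp
    have E: "edge_of K z \<in> edges K" by (rule edge_in_edges[OF zF])
    have zz: "z \<in> edge_of K z" by (rule edge_self)
    have "edge_of K z \<notin> X"
    proof
      assume "edge_of K z \<in> X"
      hence "z \<in> \<Union>X" using zz by (rule UnionI)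
      thus False using z by simp
    qed
    hence "edge_of K z \<in> edges K - X" using E by simp
    thus "z \<in> \<Union>(edges K - X)" using zz by (rule UnionI)
  qed
qed

lemma UX_sub: "rgf K \<Longrightarrow> X \<subseteq> edges K \<Longrightarrow> \<Union>X \<subseteq> fl K"
  using edges_sub by blast

lemma nv_eq:
  fixes K :: "'f rgraph"
  assumes rf: "rgf K" and X: "X \<subseteq> edges K"
  shows "nbound (del_edges K (edges K - X)) = nverts (pdual K X)"
proof -
  let ?F = "fl K" and ?A = "\<Union>X" and ?g = "tau2 (pdual K X)"
  have UY: "\<Union>(edges K - X) = ?F - ?A" by (rule UY_compl_eq[OF rf X])
  have AF: "?A \<subseteq> ?F" by (rule UX_sub[OF rf X])
  have FA: "?F - (?F - ?A) = ?A" using AF by blast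
  have rB: "rgf (pdual K X)" by (rule rgf_pdual[OF rf X])
  have gdef: "?g = (\<lambda>x. if x \<in> ?A then tau0 K x else tau2 K x)" by (simp add: pdual_fields)
  interpret S: skip ?F "tau1 K" ?g ?A
  proof
    show "finite ?F" by (rule rgf_fin[OF rf])
    show "invol ?F (tau1 K)" by (rule rgf_invol(2)[OF rf])
    show "invol ?F ?g" using rgf_invol(3)[OF rB] by (simp add: pdual_fields)
    show "?A \<subseteq> ?F" by (rule AF)
    show "\<And>x. x \<in> ?A \<Longrightarrow> ?g x \<in> ?A" using UY_closed[OF rf X] gdef by simp
    show "\<And>x. x \<in> ?F \<Longrightarrow> x \<notin> ?A \<Longrightarrow> ?g x \<notin> ?A" using UY_compl[OF rf X] gdef by simp
  qed
  have gg: "\<And>z. z \<notin> ?A \<Longrightarrow> ?g z = tau2 K z" using gdef by simp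
  have E1: "{orbs ?A {?g, ret (tau1 K) ?g ?A} x | x. x \<in> ?A} = {orbs ?A {tau0 K, ret (tau1 K) (tau2 K) ?A} x | x. x \<in> ?A}"
  proof -
    have "orbs ?A {?g, ret (tau1 K) ?g ?A} = orbs ?A {tau0 K, ret (tau1 K) (tau2 K) ?A}"
    proof (rule orbs_cong)
      fix a b assume a: "a \<in> ?A"
      have "ret (tau1 K) (tau2 K) ?A a = ret (tau1 K) ?g ?A a"
        by (rule ret_cong(2)[OF a S.ex_k[OF a] gg])
      moreover have "?g a = tau0 K a" using a gdef by simp
      ultimately show "(\<exists>t\<in>{?g, ret (tau1 K) ?g ?A}. b = t a) = (\<exists>t\<in>{tau0 K, ret (tau1 K) (tau2 K) ?A}. b = t a)"
        by simp
    qed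
    thus ?thesis by simp
  qed
  have E2: "{orbs ?F {tau1 K, ?g} x | x. x \<in> ?F \<and> orbs ?F {tau1 K, ?g} x \<subseteq> ?F - ?A} =
            {orbs ?F {tau1 K, tau2 K} x | x. x \<in> ?F \<and> orbs ?F {tau1 K, tau2 K} x \<subseteq> ?F - ?A}"
    by (rule orbs_off_set) (simp add: gdef)
  have cnt: "card {orbs ?F {tau1 K, ?g} x | x. x \<in> ?F} =
     card {orbs ?A {?g, ret (tau1 K) ?g ?A} x | x. x \<in> ?A} +
     card {orbs ?F {tau1 K, ?g} x | x. x \<in> ?F \<and> orbs ?F {tau1 K, ?g} x \<subseteq> ?F - ?A}"
    by (rule S.count)
  have nvB: "nverts (pdual K X) = card {orbs ?F {tau1 K, ?g} x | x. x \<in> ?F} + niso K"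
    by (simp add: nverts_def vertex_orbs pdual_fields)
  have nbD: "nbound (del_edges K (edges K - X)) =
     card {orbs ?A {tau0 K, ret (tau1 K) (tau2 K) ?A} x | x. x \<in> ?A} + (niso K +
     card {orbs ?F {tau1 K, tau2 K} x | x. x \<in> ?F \<and> orbs ?F {tau1 K, tau2 K} x \<subseteq> ?F - ?A})"
    unfolding nbound_def orb_eq del_fields UY FA vertex_orbs by simp
  show ?thesis using nvB nbD cnt E1 E2 by simp
qed


lemma vertex_eq:
  assumes rf: "rgf B" and x: "x \<in> fl B" and y: "y \<in> vertex_of B x"
  shows "vertex_of B y = vertex_of B x"
  unfolding vertex_orbs
  by (rule orbs_eq) (use rgf_invol[OF rf] x y in \<open>auto simp: vertex_orbs\<close>)

lemma vertex_t2: "rgf B \<Longrightarrow> x \<in> fl B \<Longrightarrow> tau2 B x \<in> vertex_of B x"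
  unfolding vertex_orbs by (rule orbs_step[OF orbs_self]) auto

lemma vertex_t1: "rgf B \<Longrightarrow> x \<in> fl B \<Longrightarrow> tau1 B x \<in> vertex_of B x"
  unfolding vertex_orbs by (rule orbs_step[OF orbs_self]) auto

lemma nonloop:
  fixes B :: "'f rgraph"
  assumes rf: "rgf B" and y: "y \<in> fl B" and nv: "vertex_of B (tau0 B y) \<noteq> vertex_of B y"
  shows "nverts (pdual B {edge_of B y}) + 1 = nverts B"
proof -
  let ?e = "edge_of B y" and ?F = "fl B" and ?g = "tau2 (pdual B {edge_of B y})"
  have eE: "{?e} \<subseteq> edges B" using edge_in_edges[OF y] by simp
  have eF: "?e \<subseteq> ?F" by (rule edge_sub[OF rf y])
  have rB: "rgf (pdual B {?e})" by (rule rgf_pdual[OF rf eE])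
  have gdef: "?g = (\<lambda>x. if x \<in> ?e then tau0 B x else tau2 B x)" by (simp add: pdual_fields)
  note r = rgfD[OF rf y] and ex = rgf_extra[OF rf y]
  interpret S: skip ?F "tau1 B" ?g ?e
  proof
    show "finite ?F" by (rule rgf_fin[OF rf])
    show "invol ?F (tau1 B)" by (rule rgf_invol(2)[OF rf])
    show "invol ?F ?g" using rgf_invol(3)[OF rB] by (simp add: pdual_fields)
    show "?e \<subseteq> ?F" by (rule eF)
    show "\<And>x. x \<in> ?e \<Longrightarrow> ?g x \<in> ?e" using edge_t0[OF rf y] gdef by simp
    show "\<And>x. x \<in> ?F \<Longrightarrow> x \<notin> ?e \<Longrightarrow> ?g x \<notin> ?e" using UY_compl[OF rf eE] gdef by simp
  qed
  interpret T: skip ?F "tau1 B" "tau2 B" ?e by (rule skip_edge[OF rf y])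
  have gg: "\<And>z. z \<notin> ?e \<Longrightarrow> tau2 B z = ?g z" using gdef by simp
  have yy: "y \<in> ?e" by (rule edge_self)
  let ?ry = "ret (tau1 B) ?g ?e y"
  have ry: "?ry = ret (tau1 B) (tau2 B) ?e y"
    by (rule ret_cong(2)[OF yy T.ex_k[OF yy] gg])
  have t0y: "tau0 B y \<in> fl B" using r by simp
  have t2y: "tau2 B y \<in> fl B" using r by simp
  have Vt0: "tau0 B y \<notin> vertex_of B y"
  proof
    assume "tau0 B y \<in> vertex_of B y"
    hence "vertex_of B (tau0 B y) = vertex_of B y" by (rule vertex_eq[OF rf y])
    thus False using nv by simp
  qed
  have Vt02: "tau0 B (tau2 B y) \<notin> vertex_of B y"
  proof
    assume a: "tau0 B (tau2 B y) \<in> vertex_of B y"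
    have "tau2 B (tau0 B y) \<in> vertex_of B (tau0 B y)" by (rule vertex_t2[OF rf t0y])
    hence "vertex_of B (tau2 B (tau0 B y)) = vertex_of B (tau0 B y)" by (rule vertex_eq[OF rf t0y])
    moreover have "vertex_of B (tau0 B (tau2 B y)) = vertex_of B y" by (rule vertex_eq[OF rf y a])
    ultimately show False using nv r by simp
  qed
  have ryin: "ret (tau1 B) (tau2 B) ?e y \<in> ?e" by (rule T.ret_in[OF yy])
  have ryne: "ret (tau1 B) (tau2 B) ?e y \<noteq> y" by (rule T.ret_neq[OF yy])
  have ryV: "ret (tau1 B) (tau2 B) ?e y \<in> vertex_of B y" unfolding vertex_orbs by (rule T.ret_orb[OF yy])
  have ry2: "?ry = tau2 B y"
  proof -
    have "ret (tau1 B) (tau2 B) ?e y = y \<or> ret (tau1 B) (tau2 B) ?e y = tau0 B y \<or>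
          ret (tau1 B) (tau2 B) ?e y = tau2 B y \<or> ret (tau1 B) (tau2 B) ?e y = tau0 B (tau2 B y)"
      using ryin by (simp add: edge_of_def)
    thus ?thesis using ryne ryV Vt0 Vt02 ry by auto
  qed
  let ?Ob = "orbs ?e {?g, ret (tau1 B) ?g ?e} y"
  have esub: "?e \<subseteq> ?Ob"
  proof -
    have o1: "y \<in> ?Ob" by (rule orbs_self)
    have o2: "?g y \<in> ?Ob" by (rule orbs_step[OF o1 yy]) simp
    have o3: "?ry \<in> ?Ob" by (rule orbs_step[OF o1 yy]) simp
    have t2e: "tau2 B y \<in> ?e" by (simp add: edge_of_def)
    have o4: "?g (tau2 B y) \<in> ?Ob" by (rule orbs_step[OF _ t2e]) (use o3 ry2 in auto)
    show ?thesis using o1 o2 o3 o4 ry2 gdef t2e by (auto simp: edge_of_def)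
  qed
  have inv2: "\<And>t. t \<in> {?g, ret (tau1 B) ?g ?e} \<Longrightarrow> invol ?e t" using S.invol_gA S.invol_ret by auto
  have one: "{orbs ?e {?g, ret (tau1 B) ?g ?e} x | x. x \<in> ?e} = {?Ob}"
  proof (rule set_eqI, rule iffI)
    fix Q assume "Q \<in> {orbs ?e {?g, ret (tau1 B) ?g ?e} x | x. x \<in> ?e}"
    then obtain z where z: "Q = orbs ?e {?g, ret (tau1 B) ?g ?e} z" "z \<in> ?e" by blast
    have "z \<in> ?Ob" using esub z(2) by blast
    hence "orbs ?e {?g, ret (tau1 B) ?g ?e} z = ?Ob"
      using orbs_eq[of "{?g, ret (tau1 B) ?g ?e}" ?e y z] inv2 yy by blast
    thus "Q \<in> {?Ob}" using z(1) by simp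
  next
    fix Q assume "Q \<in> {?Ob}"
    thus "Q \<in> {orbs ?e {?g, ret (tau1 B) ?g ?e} x | x. x \<in> ?e}" using yy by blast
  qed
  have E2: "{orbs ?F {tau1 B, ?g} x | x. x \<in> ?F \<and> orbs ?F {tau1 B, ?g} x \<subseteq> ?F - ?e} =
            {orbs ?F {tau1 B, tau2 B} x | x. x \<in> ?F \<and> orbs ?F {tau1 B, tau2 B} x \<subseteq> ?F - ?e}"
    by (rule orbs_off_set) (simp add: gdef)
  have cnt: "card {orbs ?F {tau1 B, ?g} x | x. x \<in> ?F} =
     card {orbs ?e {?g, ret (tau1 B) ?g ?e} x | x. x \<in> ?e} +
     card {orbs ?F {tau1 B, ?g} x | x. x \<in> ?F \<and> orbs ?F {tau1 B, ?g} x \<subseteq> ?F - ?e}"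
    by (rule S.count)
  let ?V = "{orbs ?F {tau1 B, tau2 B} x | x. x \<in> ?F}"
  let ?VN = "{orbs ?F {tau1 B, tau2 B} x | x. x \<in> ?F \<and> orbs ?F {tau1 B, tau2 B} x \<subseteq> ?F - ?e}"
  let ?VE = "{vertex_of B y, vertex_of B (tau0 B y)}"
  have split: "?V = ?VN \<union> ?VE"
  proof (rule set_eqI, rule iffI)
    fix Q assume "Q \<in> ?V"
    then obtain x where x: "Q = orbs ?F {tau1 B, tau2 B} x" "x \<in> ?F" by blast
    show "Q \<in> ?VN \<union> ?VE"
    proof (cases "Q \<subseteq> ?F - ?e")
      case True then show ?thesis using x by blast
    next
      case False
      have QF: "Q \<subseteq> ?F" using x vertex_sub[OF rf x(2)] by (simp add: vertex_orbs)
      then obtain z where z: "z \<in> Q" "z \<in> ?e" using False by blast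
      have Qz: "Q = vertex_of B z" using vertex_eq[OF rf x(2), of z] z x by (simp add: vertex_orbs)
      have "z = y \<or> z = tau0 B y \<or> z = tau2 B y \<or> z = tau0 B (tau2 B y)" using z(2) by (simp add: edge_of_def)
      moreover have "vertex_of B (tau2 B y) = vertex_of B y" by (rule vertex_eq[OF rf y vertex_t2[OF rf y]])
      moreover have "vertex_of B (tau0 B (tau2 B y)) = vertex_of B (tau0 B y)"
      proof -
        have "tau2 B (tau0 B y) \<in> vertex_of B (tau0 B y)" by (rule vertex_t2[OF rf t0y])
        thus ?thesis using vertex_eq[OF rf t0y] r by simp
      qed
      ultimately have "Q \<in> ?VE" using Qz by auto
      thus ?thesis by blast
    qed
  next
    fix Q assume "Q \<in> ?VN \<union> ?VE"
    thus "Q \<in> ?V" using y t0y by (auto simp: vertex_orbs)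
  qed
  have disj: "?VN \<inter> ?VE = {}"
  proof -
    have "y \<in> vertex_of B y" unfolding vertex_orbs by (rule orbs_self)
    moreover have "tau0 B y \<in> vertex_of B (tau0 B y)" unfolding vertex_orbs by (rule orbs_self)
    moreover have "tau0 B y \<in> ?e" by (simp add: edge_of_def)
    ultimately have "\<not> vertex_of B y \<subseteq> ?F - ?e" "\<not> vertex_of B (tau0 B y) \<subseteq> ?F - ?e" using yy by blast+
    thus ?thesis by (auto simp: vertex_orbs)
  qed
  have finVN: "finite ?VN"
  proof -
    have "?VN \<subseteq> (orbs ?F {tau1 B, tau2 B}) ` ?F" by blast
    thus ?thesis using rgf_fin[OF rf] finite_subset by blast
  qed
  have cVE: "card ?VE = 2" using nv by simp
  have cV: "card ?V = card ?VN + 2" using card_Un_disjoint[OF finVN _ disj] split cVE by simp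
  have nvB: "nverts B = card ?V + niso B" by (simp add: nverts_def vertex_orbs)
  have nvP: "nverts (pdual B {?e}) = card {orbs ?F {tau1 B, ?g} x | x. x \<in> ?F} + niso B"
    by (simp add: nverts_def vertex_orbs pdual_fields)
  show ?thesis using nvB nvP cnt one E2 cV by simp
qed

lemma nverts_cong:
  "fl G = fl G' \<Longrightarrow> tau1 G = tau1 G' \<Longrightarrow> tau2 G = tau2 G' \<Longrightarrow> niso G = niso G' \<Longrightarrow> nverts G = nverts G'"
  by (simp add: nverts_def vertex_of_def orb_def)

lemma symdiff_mem:
  assumes rf: "rgf K" and X: "X \<subseteq> edges K" and e: "e \<in> edges K"
  shows "x \<in> \<Union>((X - {e}) \<union> ({e} - X)) \<longleftrightarrow> (x \<in> e) \<noteq> (x \<in> \<Union>X)"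
proof
  assume "x \<in> \<Union>((X - {e}) \<union> ({e} - X))"
  then obtain e' where e': "e' \<in> (X - {e}) \<union> ({e} - X)" "x \<in> e'" by blast
  show "(x \<in> e) \<noteq> (x \<in> \<Union>X)"
  proof (cases "e' = e")
    case True
    hence "e \<notin> X" using e' by blast
    have "x \<notin> \<Union>X"
    proof
      assume "x \<in> \<Union>X"
      then obtain e'' where e'': "e'' \<in> X" "x \<in> e''" by blast
      have "e'' \<in> edges K" using e'' X by blast
      hence "e'' = e" using edges_disj[OF rf _ e e''(2)] e' True by blast
      thus False using e''(1) \<open>e \<notin> X\<close> by simp
    qed
    thus ?thesis using e' True by simp
  next
    case False
    hence "e' \<in> X" using e' by blast
    have "x \<notin> e"
    proof
      assume "x \<in> e"
      have "e' \<in> edges K" using \<open>e' \<in> X\<close> X by blast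
      hence "e' = e" using edges_disj[OF rf _ e e'(2) \<open>x \<in> e\<close>] by blast
      thus False using False by simp
    qed
    thus ?thesis using e' \<open>e' \<in> X\<close> by blast
  qed
next
  assume a: "(x \<in> e) \<noteq> (x \<in> \<Union>X)"
  show "x \<in> \<Union>((X - {e}) \<union> ({e} - X))"
  proof (cases "x \<in> e")
    case True
    hence "x \<notin> \<Union>X" using a by simp
    hence "e \<notin> X" using True by blast
    thus ?thesis using True by blast
  next
    case False
    then obtain e' where "e' \<in> X" "x \<in> e'" using a by blast
    hence "e' \<noteq> e" using False by blast
    thus ?thesis using \<open>e' \<in> X\<close> \<open>x \<in> e'\<close> by blast
  qed
qed

lemma tau2_symdiff:
  assumes rf: "rgf K" and X: "X \<subseteq> edges K" and e: "e \<in> edges K"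
  shows "tau2 (pdual (pdual K X) {e}) = tau2 (pdual K ((X - {e}) \<union> ({e} - X)))"
proof
  fix x
  show "tau2 (pdual (pdual K X) {e}) x = tau2 (pdual K ((X - {e}) \<union> ({e} - X))) x"
    using symdiff_mem[OF rf X e, of x] by (auto simp: pdual_fields)
qed

lemma exists_bouquet:
  fixes K :: "'f rgraph"
  assumes rf: "rgf K" and conn: "\<forall>z\<in>fl K. cmp K z = fl K" and ne: "fl K \<noteq> {}"
  shows "\<exists>X. X \<subseteq> edges K \<and> nverts (pdual K X) = 1 + niso K"
proof -
  obtain X0 where X0: "X0 \<subseteq> edges K" "\<forall>X. X \<subseteq> edges K \<longrightarrow> nverts (pdual K X0) \<le> nverts (pdual K X)"
    using ex_has_least_nat[of "\<lambda>X. X \<subseteq> edges K" "{}" "\<lambda>X. nverts (pdual K X)"] by blast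
  let ?B = "pdual K X0"
  have rB: "rgf ?B" by (rule rgf_pdual[OF rf X0(1)])
  show ?thesis
  proof (cases "\<exists>y\<in>fl ?B. vertex_of ?B (tau0 ?B y) \<noteq> vertex_of ?B y")
    case True
    then obtain y where y: "y \<in> fl ?B" "vertex_of ?B (tau0 ?B y) \<noteq> vertex_of ?B y" by blast
    have yK: "y \<in> fl K" using y by (simp add: pdual_fields)
    have nl: "nverts (pdual ?B {edge_of ?B y}) + 1 = nverts ?B" by (rule nonloop[OF rB y])
    have ee: "edge_of ?B y = edge_of K y" by (rule edge_of_pdual[OF rf X0(1) yK])
    have eK: "edge_of K y \<in> edges K" by (rule edge_in_edges[OF yK])
    let ?X1 = "(X0 - {edge_of K y}) \<union> ({edge_of K y} - X0)"
    have X1: "?X1 \<subseteq> edges K" using X0(1) eK by blast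
    have t2: "tau2 (pdual ?B {edge_of K y}) = tau2 (pdual K ?X1)" by (rule tau2_symdiff[OF rf X0(1) eK])
    have "nverts (pdual ?B {edge_of K y}) = nverts (pdual K ?X1)"
      by (rule nverts_cong) (simp add: pdual_fields, simp add: pdual_fields, rule t2, simp add: pdual_fields)
    hence "nverts (pdual K ?X1) + 1 = nverts ?B" using nl ee by simp
    moreover have "nverts ?B \<le> nverts (pdual K ?X1)" using X0(2) X1 by blast
    ultimately show ?thesis by simp
  next
    case False
    hence vt0: "\<And>y. y \<in> fl ?B \<Longrightarrow> vertex_of ?B (tau0 ?B y) = vertex_of ?B y" by blast
    have cmpB: "cmp ?B z = cmp K z" for z
      unfolding cmp_def pdual_fields
      by (rule fun_cong, rule orbs_cong) auto
    have allfl: "vertex_of ?B z = fl K" if z: "z \<in> fl K" for z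
    proof
      have zB: "z \<in> fl ?B" using z by (simp add: pdual_fields)
      show "vertex_of ?B z \<subseteq> fl K" using vertex_sub[OF rB zB] by (simp add: pdual_fields)
      have "cmp ?B z \<subseteq> vertex_of ?B z"
        unfolding cmp_def
      proof (rule orbs_sub)
        show "z \<in> vertex_of ?B z" unfolding vertex_orbs by (rule orbs_self)
      next
        fix a t assume a: "a \<in> vertex_of ?B z" "a \<in> fl ?B" "t \<in> {tau0 ?B, tau1 ?B, tau2 ?B}"
        have va: "vertex_of ?B a = vertex_of ?B z" by (rule vertex_eq[OF rB zB a(1)])
        show "t a \<in> vertex_of ?B z"
        proof -
          have "t = tau0 ?B \<or> t = tau1 ?B \<or> t = tau2 ?B" using a(3) by blast
          moreover have "tau0 ?B a \<in> vertex_of ?B z"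
          proof -
            have "tau0 ?B a \<in> fl ?B" using rgfD[OF rB a(2)] by simp
            hence "tau0 ?B a \<in> vertex_of ?B (tau0 ?B a)" unfolding vertex_orbs by (intro orbs_self)
            thus ?thesis using vt0[OF a(2)] va by simp
          qed
          moreover have "tau1 ?B a \<in> vertex_of ?B z" using vertex_t1[OF rB a(2)] va by simp
          moreover have "tau2 ?B a \<in> vertex_of ?B z" using vertex_t2[OF rB a(2)] va by simp
          ultimately show ?thesis by blast
        qed
      qed
      thus "fl K \<subseteq> vertex_of ?B z" using cmpB[of z] conn z by simp
    qed
    obtain z0 where z0: "z0 \<in> fl K" using ne by blast
    have "{vertex_of ?B x | x. x \<in> fl ?B} = {fl K}"
      using allfl z0 by (auto simp: pdual_fields)
    hence "nverts ?B = 1 + niso K" by (simp add: nverts_def pdual_fields)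
    thus ?thesis using X0(1) by blast
  qed
qed



lemma invol_card:
  assumes "finite S" "\<forall>y\<in>S. f y \<in> S \<and> f (f y) = y \<and> f y \<noteq> y"
  shows "card S = 2 * card ((\<lambda>y. {y, f y}) ` S)"
  using assms
proof (induction "card S" arbitrary: S rule: less_induct)
  case less
  show ?case
  proof (cases "S = {}")
    case True then show ?thesis by simp
  next
    case False
    then obtain y where y: "y \<in> S" by blast
    have fy: "f y \<in> S" "f (f y) = y" "f y \<noteq> y" using less.prems(2) y by auto
    let ?S' = "S - {y, f y}"
    have fin': "finite ?S'" using less.prems(1) by simp
    have cS': "card ?S' = card S - 2" using fy y less.prems(1) by (simp add: card_Diff_subset)
    have cS: "card S \<ge> 2"
    proof -
      have "{y, f y} \<subseteq> S" using y fy by simp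
      hence "card {y, f y} \<le> card S" using less.prems(1) by (rule card_mono[rotated])
      thus ?thesis using fy by simp
    qed
    have pr': "\<forall>z\<in>?S'. f z \<in> ?S' \<and> f (f z) = z \<and> f z \<noteq> z"
    proof
      fix z assume z: "z \<in> ?S'"
      have zS: "z \<in> S" using z by simp
      have "f z \<in> S" "f (f z) = z" "f z \<noteq> z" using less.prems(2) zS by auto
      moreover have "f z \<noteq> y" using z fy \<open>f (f z) = z\<close> by auto
      moreover have "f z \<noteq> f y"
      proof
        assume "f z = f y"
        hence "f (f z) = f (f y)" by simp
        hence "z = y" using \<open>f (f z) = z\<close> fy by simp
        thus False using z by simp
      qed
      ultimately show "f z \<in> ?S' \<and> f (f z) = z \<and> f z \<noteq> z" by simp
    qed
    have IH: "card ?S' = 2 * card ((\<lambda>y. {y, f y}) ` ?S')"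
      using less.hyps[of ?S'] cS' cS fin' pr' by simp
    have img: "(\<lambda>y. {y, f y}) ` S = insert {y, f y} ((\<lambda>y. {y, f y}) ` ?S')"
    proof (rule set_eqI, rule iffI)
      fix P assume "P \<in> (\<lambda>y. {y, f y}) ` S"
      then obtain z where z: "z \<in> S" "P = {z, f z}" by blast
      show "P \<in> insert {y, f y} ((\<lambda>y. {y, f y}) ` ?S')"
      proof (cases "z = y \<or> z = f y")
        case True
        hence "P = {y, f y}" using z fy by auto
        thus ?thesis by simp
      next
        case False
        hence "z \<in> ?S'" using z by simp
        thus ?thesis using z by blast
      qed
    next
      fix P assume "P \<in> insert {y, f y} ((\<lambda>y. {y, f y}) ` ?S')"
      thus "P \<in> (\<lambda>y. {y, f y}) ` S" using y by auto
    qed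
    have notin: "{y, f y} \<notin> (\<lambda>y. {y, f y}) ` ?S'"
    proof
      assume "{y, f y} \<in> (\<lambda>y. {y, f y}) ` ?S'"
      then obtain z where z: "z \<in> ?S'" "{y, f y} = {z, f z}" by blast
      hence "y = z \<or> y = f z" by (auto simp: doubleton_eq_iff)
      moreover have "f z \<in> ?S'" using pr' z(1) by blast
      ultimately show False using z(1) by auto
    qed
    have "card ((\<lambda>y. {y, f y}) ` S) = card ((\<lambda>y. {y, f y}) ` ?S') + 1"
      unfolding img using notin fin' by simp
    thus ?thesis using IH cS' cS by simp
  qed
qed

lemma setcomp_image: "{h x | x. x \<in> S \<and> P x} = h ` {x \<in> S. P x}"
  by blast

lemma comp_even:
  fixes c :: "'f \<Rightarrow> bool" and G :: "'f rgraph"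
  assumes rf: "rgf G" and DF: "D \<subseteq> fl G"
    and Dcl: "\<forall>y\<in>D. tau0 G y \<in> D \<and> tau1 G y \<in> D"
    and c0: "\<forall>y\<in>D. c (tau0 G y) \<noteq> c y"
  shows "even (card {{y, tau1 G y} | y. y \<in> D \<and> c (tau1 G y) = c y})"
proof -
  have finD: "finite D" using DF rgf_fin[OF rf] finite_subset by blast
  let ?t0 = "tau0 G" and ?t1 = "tau1 G"
  let ?DT = "{y \<in> D. c y}" and ?DF = "{y \<in> D. \<not> c y}"
  let ?M = "{y \<in> D. c (?t1 y) = c y}"
  have r: "?t0 (?t0 y) = y \<and> ?t1 (?t1 y) = y \<and> ?t1 y \<noteq> y" if "y \<in> D" for y
    using rgfD[OF rf subsetD[OF DF that]] by simp
  have inj0: "inj_on ?t0 D"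
  proof (rule inj_onI)
    fix a b assume "a \<in> D" "b \<in> D" "?t0 a = ?t0 b"
    thus "a = b" using r[of a] r[of b] by metis
  qed
  have inj1: "inj_on ?t1 D"
  proof (rule inj_onI)
    fix a b assume "a \<in> D" "b \<in> D" "?t1 a = ?t1 b"
    thus "a = b" using r[of a] r[of b] by metis
  qed
  have i0: "?t0 ` ?DT = ?DF"
  proof (rule set_eqI, rule iffI)
    fix z assume "z \<in> ?t0 ` ?DT"
    then obtain y where "y \<in> ?DT" "z = ?t0 y" by blast
    thus "z \<in> ?DF" using Dcl c0 by auto
  next
    fix z assume z: "z \<in> ?DF"
    have "?t0 z \<in> ?DT" using z Dcl c0 by auto
    moreover have "z = ?t0 (?t0 z)" using r z by simp
    ultimately show "z \<in> ?t0 ` ?DT" by blast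
  qed
  have ij0: "inj_on ?t0 ?DT" using inj0 by (rule inj_on_subset) auto
  have cTF: "card ?DT = card ?DF"
    using card_image[OF ij0] i0 by simp
  have i1: "?t1 ` (?DT - ?M) = ?DF - ?M"
  proof (rule set_eqI, rule iffI)
    fix z assume "z \<in> ?t1 ` (?DT - ?M)"
    then obtain y where y: "y \<in> ?DT - ?M" "z = ?t1 y" by blast
    have "c (?t1 (?t1 y)) \<noteq> c (?t1 y)" using y r by auto
    thus "z \<in> ?DF - ?M" using y Dcl by auto
  next
    fix z assume z: "z \<in> ?DF - ?M"
    have "c (?t1 (?t1 z)) \<noteq> c (?t1 z)" using z r by auto
    hence "?t1 z \<in> ?DT - ?M" using z Dcl by auto
    moreover have "z = ?t1 (?t1 z)" using r z by simp
    ultimately show "z \<in> ?t1 ` (?DT - ?M)" by blast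
  qed
  have ij1: "inj_on ?t1 (?DT - ?M)" using inj1 by (rule inj_on_subset) auto
  have cTF2: "card (?DT - ?M) = card (?DF - ?M)"
    using card_image[OF ij1] i1 by simp
  have finT: "finite ?DT" "finite ?DF" "finite ?M" using finD by auto
  have s1: "card ?DT = card (?DT \<inter> ?M) + card (?DT - ?M)"
    using card_Int_Diff[OF finT(1), of ?M] by simp
  have s2: "card ?DF = card (?DF \<inter> ?M) + card (?DF - ?M)"
    using card_Int_Diff[OF finT(2), of ?M] by simp
  have eqM: "card (?DT \<inter> ?M) = card (?DF \<inter> ?M)" using s1 s2 cTF cTF2 by simp
  have pT: "card (?DT \<inter> ?M) = 2 * card ((\<lambda>y. {y, ?t1 y}) ` (?DT \<inter> ?M))"
  proof (rule invol_card)
    show "finite (?DT \<inter> ?M)" using finT by simp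
    show "\<forall>y\<in>?DT \<inter> ?M. ?t1 y \<in> ?DT \<inter> ?M \<and> ?t1 (?t1 y) = y \<and> ?t1 y \<noteq> y"
      using r Dcl by auto
  qed
  have pF: "card (?DF \<inter> ?M) = 2 * card ((\<lambda>y. {y, ?t1 y}) ` (?DF \<inter> ?M))"
  proof (rule invol_card)
    show "finite (?DF \<inter> ?M)" using finT by simp
    show "\<forall>y\<in>?DF \<inter> ?M. ?t1 y \<in> ?DF \<inter> ?M \<and> ?t1 (?t1 y) = y \<and> ?t1 y \<noteq> y"
      using r Dcl by auto
  qed
  have un: "{{y, ?t1 y} | y. y \<in> D \<and> c (?t1 y) = c y} =
      (\<lambda>y. {y, ?t1 y}) ` (?DT \<inter> ?M) \<union> (\<lambda>y. {y, ?t1 y}) ` (?DF \<inter> ?M)" by blast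
  have dj: "(\<lambda>y. {y, ?t1 y}) ` (?DT \<inter> ?M) \<inter> (\<lambda>y. {y, ?t1 y}) ` (?DF \<inter> ?M) = {}"
  proof -
    { fix P assume "P \<in> (\<lambda>y. {y, ?t1 y}) ` (?DT \<inter> ?M)" "P \<in> (\<lambda>y. {y, ?t1 y}) ` (?DF \<inter> ?M)"
      then obtain y z where yz: "y \<in> ?DT \<inter> ?M" "z \<in> ?DF \<inter> ?M" "{y, ?t1 y} = {z, ?t1 z}" by blast
      hence "y = z \<or> y = ?t1 z" by (auto simp: doubleton_eq_iff)
      hence False using yz by auto }
    thus ?thesis by blast
  qed
  have "card {{y, ?t1 y} | y. y \<in> D \<and> c (?t1 y) = c y} =
        card ((\<lambda>y. {y, ?t1 y}) ` (?DT \<inter> ?M)) + card ((\<lambda>y. {y, ?t1 y}) ` (?DF \<inter> ?M))"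
    unfolding un by (rule card_Un_disjoint) (use finT dj in auto)
  also have "\<dots> = 2 * card ((\<lambda>y. {y, ?t1 y}) ` (?DT \<inter> ?M))" using pT pF eqM by simp
  finally show ?thesis by simp
qed


lemma orbs_restrict:
  assumes SF: "S \<subseteq> F" and cl: "\<And>a t. a \<in> S \<Longrightarrow> t \<in> ts \<Longrightarrow> t a \<in> S" and x: "x \<in> S"
  shows "orbs S ts x = orbs F ts x"
proof
  have OS: "orbs S ts x \<subseteq> S" by (rule orbs_sub) (use x cl in auto)
  show "orbs S ts x \<subseteq> orbs F ts x"
  proof (rule orbs_sub)
    show "x \<in> orbs F ts x" by (rule orbs_self)
  next
    fix a t assume a: "a \<in> orbs F ts x" "a \<in> S" "t \<in> ts"
    show "t a \<in> orbs F ts x" using orbs_step[OF a(1) _ a(3)] a(2) SF by blast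
  qed
  show "orbs F ts x \<subseteq> orbs S ts x"
  proof (rule orbs_sub)
    show "x \<in> orbs S ts x" by (rule orbs_self)
  next
    fix a t assume a: "a \<in> orbs S ts x" "a \<in> F" "t \<in> ts"
    have "a \<in> S" using a(1) OS by blast
    thus "t a \<in> orbs S ts x" using orbs_step[OF a(1) _ a(3)] by blast
  qed
qed

lemma po_isov: "po_conn (isov H)"
proof -
  let ?I = "isov H"
  have e: "edges ?I = {}" by (simp add: edges_def isov_def)
  have q: "qtree_conn ?I {}"
    unfolding qtree_conn_def e by (simp add: nbound_def del_fields isov_def)
  have b: "po_bouquet (pdual ?I {})"
    unfolding po_bouquet_def bouquet_def by (simp add: nverts_def pdual_fields isov_def)
  show ?thesis unfolding po_conn_def using q b by blast
qed

lemma thmB: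
  fixes H :: "'f rgraph" and c :: "'f \<Rightarrow> bool"
  assumes rg: "rg H" and gd: "good c H"
  shows "pseudo_orientable H"
proof -
  have rf: "rgf H" using rg rg_iff by blast
  have c02: "c (tau0 H y) \<noteq> c y \<and> c (tau2 H y) \<noteq> c y" if "y \<in> fl H" for y
    using gd that unfolding good_def by blast
  have dH: "card (defs c H) \<le> 2" using gd unfolding good_def by blast
  have finH: "finite (defs c H)"
  proof -
    have "defs c H \<subseteq> (\<lambda>y. {y, tau1 H y}) ` fl H" unfolding defs_def by blast
    thus ?thesis using rgf_fin[OF rf] finite_subset by blast
  qed
  show ?thesis
  proof (cases "fl H = {}")
    case True
    hence "niso H > 0" using rg by (simp add: rg_def nonempty_rg_def)
    moreover have "fcomps H = {}" using True by (simp add: fcomps_def)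
    ultimately show ?thesis unfolding pseudo_orientable_def using po_isov by blast
  next
    case False
    let ?M = "{y \<in> fl H. c (tau1 H y) = c y}"
    obtain x0 where x0: "x0 \<in> fl H" "?M \<noteq> {} \<longrightarrow> x0 \<in> ?M"
    proof (cases "?M = {}")
      case True
      then show ?thesis using False that by blast
    next
      case F2: False
      then obtain y where "y \<in> ?M" by blast
      then show ?thesis using that by blast
    qed
    let ?C = "cmp H x0"
    have CF: "?C \<subseteq> fl H" by (rule comp_sub[OF rf x0(1)])
    have Ccl: "\<forall>y\<in>?C. tau0 H y \<in> ?C \<and> tau1 H y \<in> ?C \<and> tau2 H y \<in> ?C"
      using comp_step[OF rf x0(1)] by blast
    have Cin: "?C \<in> fcomps H" unfolding fcomps_eq using x0(1) by blast
    have x0C: "x0 \<in> ?C" by (rule comp_self)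
    define corners where "corners D = {{y, tau1 H y} | y. y \<in> D \<and> c (tau1 H y) = c y}" for D
    have cor_sub: "corners D \<subseteq> defs c H" if "D \<subseteq> fl H" for D
      using that unfolding corners_def defs_def by blast
    have ev: "even (card (corners (cmp H z)))" if z: "z \<in> fl H" for z
      unfolding corners_def
    proof (rule comp_even[OF rf comp_sub[OF rf z]])
      show "\<forall>y\<in>cmp H z. tau0 H y \<in> cmp H z \<and> tau1 H y \<in> cmp H z" using comp_step[OF rf z] by blast
      show "\<forall>y\<in>cmp H z. c (tau0 H y) \<noteq> c y" using c02 comp_sub[OF rf z] by blast
    qed
    have two: "card (corners (cmp H z)) \<ge> 2" if z: "z \<in> fl H" and ne: "corners (cmp H z) \<noteq> {}" for z
    proof -
      have "finite (corners (cmp H z))" using cor_sub[OF comp_sub[OF rf z]] finH finite_subset by blast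
      hence "card (corners (cmp H z)) > 0" using ne by (simp add: card_gt_0_iff)
      thus ?thesis using ev[OF z] by presburger
    qed
    have key: "D \<inter> ?M = {}" if D: "D \<in> fcomps H" "D \<noteq> ?C" for D
    proof (rule ccontr)
      assume ne: "D \<inter> ?M \<noteq> {}"
      obtain z where z: "z \<in> fl H" "D = cmp H z" using D(1) unfolding fcomps_eq by blast
      obtain y where y: "y \<in> D" "y \<in> ?M" using ne by blast
      have x0M: "x0 \<in> ?M" using x0 y by blast
      have disj: "D \<inter> ?C = {}"
      proof (rule ccontr)
        assume "D \<inter> ?C \<noteq> {}"
        then obtain w where w: "w \<in> D" "w \<in> ?C" by blast
        have "cmp H w = D" using comp_eq[OF rf z(1)] w z by simp
        moreover have "cmp H w = ?C" using comp_eq[OF rf x0(1)] w by simp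
        ultimately show False using D(2) by simp
      qed
      have neD: "corners D \<noteq> {}" using y unfolding corners_def by blast
      have neC: "corners ?C \<noteq> {}" using x0M x0C unfolding corners_def by blast
      have cD: "card (corners D) \<ge> 2" using two[OF z(1)] neD z by simp
      have cC: "card (corners ?C) \<ge> 2" using two[OF x0(1) neC] .
      have DF: "D \<subseteq> fl H" using comp_sub[OF rf z(1)] z by simp
      have dj: "corners D \<inter> corners ?C = {}"
      proof -
        { fix P assume P: "P \<in> corners D" "P \<in> corners ?C"
          then obtain a b where ab: "a \<in> D" "P = {a, tau1 H a}" "b \<in> ?C" "P = {b, tau1 H b}"
            unfolding corners_def by blast
          have "a = b \<or> a = tau1 H b" using ab by (auto simp: doubleton_eq_iff)
          hence "a \<in> ?C" using ab Ccl by auto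
          hence False using ab disj by blast }
        thus ?thesis by blast
      qed
      have fD: "finite (corners D)" using cor_sub[OF DF] finH finite_subset by blast
      have fC: "finite (corners ?C)" using cor_sub[OF CF] finH finite_subset by blast
      have "card (corners D \<union> corners ?C) = card (corners D) + card (corners ?C)"
        by (rule card_Un_disjoint[OF fD fC dj])
      moreover have "card (corners D \<union> corners ?C) \<le> card (defs c H)"
        using cor_sub[OF DF] cor_sub[OF CF] finH by (intro card_mono) auto
      ultimately show False using cD cC dH by simp
    qed
    let ?K = "restr H ?C"
    have rK: "rgf ?K" by (rule rgf_restr[OF rf CF Ccl])
    have po1: "po_conn ?K"
    proof -
      have conn: "\<forall>z\<in>fl ?K. cmp ?K z = fl ?K"
      proof
        fix z assume "z \<in> fl ?K"
        hence z: "z \<in> ?C" by (simp add: restr_fields)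
        have "cmp ?K z = orbs ?C {tau0 H, tau1 H, tau2 H} z" by (simp add: cmp_def restr_fields)
        also have "\<dots> = orbs (fl H) {tau0 H, tau1 H, tau2 H} z"
          by (rule orbs_restrict[OF CF _ z]) (use Ccl in auto)
        also have "\<dots> = ?C" using comp_eq[OF rf x0(1) z] by (simp add: cmp_def)
        finally show "cmp ?K z = fl ?K" by (simp add: restr_fields)
      qed
      have neK: "fl ?K \<noteq> {}" using x0C by (auto simp: restr_fields)
      obtain X where X: "X \<subseteq> edges ?K" "nverts (pdual ?K X) = 1 + niso ?K"
        using exists_bouquet[OF rK conn neK] by blast
      have nv1: "nverts (pdual ?K X) = 1" using X(2) by (simp add: restr_fields)
      have qt: "qtree_conn ?K X" unfolding qtree_conn_def using X(1) nv_eq[OF rK X(1)] nv1 by simp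
      let ?B = "pdual ?K X"
      have rB: "rgf ?B" by (rule rgf_pdual[OF rK X(1)])
      have bq: "bouquet ?B" using nv1 by (simp add: bouquet_def)
      have neB: "fl ?B \<noteq> {}" using neK by (simp add: pdual_fields)
      obtain x1 where x1: "x1 \<in> fl ?B" "fl ?B \<subseteq> vertex_of ?B x1"
        using bouquet_vertex[OF rB _ bq neB] by (auto simp: pdual_fields restr_fields)
      have gK: "good c ?K"
      proof -
        have "\<forall>y\<in>fl ?K. c (tau0 ?K y) \<noteq> c y \<and> c (tau2 ?K y) \<noteq> c y"
          using c02 CF by (auto simp: restr_fields)
        moreover have "defs c ?K = corners ?C" by (simp add: defs_def corners_def restr_fields)
        moreover have "card (corners ?C) \<le> 2"
          using cor_sub[OF CF] finH dH card_mono[of "defs c H" "corners ?C"] by simp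
        ultimately show ?thesis unfolding good_def by simp
      qed
      have "po_bouquet ?B" by (rule good_pob[OF rB bq x1 good_pdual[OF gK]])
      thus ?thesis unfolding po_conn_def using qt by blast
    qed
    have oth: "\<forall>D\<in>fcomps H. D \<noteq> ?C \<longrightarrow> orientable (restr H D)"
    proof (intro ballI impI)
      fix D assume D: "D \<in> fcomps H" "D \<noteq> ?C"
      obtain z where z: "z \<in> fl H" "D = cmp H z" using D(1) unfolding fcomps_eq by blast
      have DF: "D \<subseteq> fl H" using comp_sub[OF rf z(1)] z by simp
      have "\<forall>y\<in>D. c (tau0 H y) \<noteq> c y \<and> c (tau1 H y) \<noteq> c y \<and> c (tau2 H y) \<noteq> c y"
      proof
        fix y assume y: "y \<in> D"
        have yF: "y \<in> fl H" using y DF by blast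
        have "y \<notin> ?M" using key[OF D] y by blast
        thus "c (tau0 H y) \<noteq> c y \<and> c (tau1 H y) \<noteq> c y \<and> c (tau2 H y) \<noteq> c y" using c02[OF yF] yF by simp
      qed
      thus "orientable (restr H D)" unfolding orientable_def restr_fields by blast
    qed
    show ?thesis unfolding pseudo_orientable_def using Cin po1 oth by blast
  qed
qed

theorem proposition3p9:
  fixes G H :: "'f rgraph"
  assumes "rg G"
    and "pseudo_orientable G"
    and "minor_step\<^sup>*\<^sup>* G H"
  shows "pseudo_orientable H"
proof -
  have "rg H \<and> (\<exists>c. good c H)"
    using assms(3)
  proof (induction rule: rtranclp_induct)
    case base
    then show ?case using assms(1) thmA[OF assms(1,2)] by blast
  next
    case (step y z)
    then obtain c where "good c y" by blast
    then show ?case using step_good[OF step(2)] by blast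
  qed
  thus ?thesis using thmB by blast
qed



end
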